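(* Let $f_1=k_1\in\mathbb R\setminus\{0\}$, let $f_2=f_2(x^1)$ be a smooth nowhere-vanishing function depending only on $x^1$, let $f_3=k_3\in\mathbb R\setminus\{0\}$, and $g=\frac{1}{k_1^2}dx^1\otimes dx^1+\frac{1}{f_2^2}dx^2\otimes dx^2+\frac{1}{k_3^2}dx^3\otimes dx^3$. Let $F_0$ satisfy $F_0'=-\frac{f_2^2}{k_1}$. Then $V=\sum_{k=1}^3V^kE_k$, with $E_i=f_i\frac{\partial}{\partial x^i}$, is a Killing vector field of $(\mathbb R^3,g)$ if and only if one of the following holds: (i) $V^1=0$, $V^2(x^1)=\frac{c_1}{f_2(x^1)}$, $V^3=c_2$, with $c_1,c_2\in\mathbb R$; (ii) $f_2=k_2$ is constant and $V^1(x^2,x^3)=c_1x^2+c_2x^3+c_3$, $V^2(x^1,x^3)=-\frac{c_1k_2}{k_1}x^1-c_4k_2x^3+c_5$, $V^3(x^1,x^2)=-\frac{c_2k_3}{k_1}x^1+c_4k_3x^2+c_6$, with $c_1,\dots,c_6\in\mathbb R$; (iii) $f_2(x^1)=a_1e^{a_2x^1}$ with $a_1,a_2\in\mathbb R\setminus\{0\}$, and $V^1(x^2)=c_1x^2+c_2$, $V^2(x^1,x^2)=k_1\left(\frac{f_2'}{f_2^2}\right)(x^1)\left[\frac{c_1}{2}(x^2)^2+c_2x^2+c_3\right]+\frac{c_1F_0(x^1)+c_4}{f_2(x^1)}$, $V^3=c_3$, with $c_1,\dots,c_4\in\mathbb R$; (iv) the function $k:=\frac{k_1^2}{f_2^2}\left(\frac{f_2'}{f_2}\right)'$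 is a constant in $(0,+\infty)$, and $V^1(x^2)=c_1\cos(\sqrt{k}x^2)+c_2\sin(\sqrt{k}x^2)$, $V^2(x^1,x^2)=k_1\left(\frac{f_2'}{f_2^2}\right)(x^1)\left[\frac{1}{\sqrt{k}}\big(c_1\sin(\sqrt{k}x^2)-c_2\cos(\sqrt{k}x^2)\big)+c_3\right]+\frac{c_3kF_0(x^1)+c_4}{f_2(x^1)}$, $V^3=c_3$, with $c_1,\dots,c_4\in\mathbb R$; (v) the function $k:=\frac{k_1^2}{f_2^2}\left(\frac{f_2'}{f_2}\right)'$ is a constant in $(-\infty,0)$, and $V^1(x^2)=c_1e^{\sqrt{-k}x^2}+c_2e^{-\sqrt{-k}x^2}$, $V^2(x^1,x^2)=k_1\left(\frac{f_2'}{f_2^2}\right)(x^1)\left[\frac{1}{\sqrt{-k}}\big(c_1e^{\sqrt{-k}x^2}-c_2e^{-\sqrt{-k}x^2}\big)+c_3\right]+\frac{c_3kF_0(x^1)+c_4}{f_2(x^1)}$, $V^3=c_3$, with $c_1,\dots,c_4\in\mathbb R$.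
   Context: $x^1,x^2,x^3$ are the standard coordinates on $\mathbb R^3$; a prime denotes the derivative with respect to $x^1$; $V^k$ are smooth functions and writing $h(x^i)$ or $h(x^i,x^j)$ means $h$ depends only on those variables. A vector field $V$ is Killing if $\mathcal L_Vg=0$. *)

theory Defs
  imports "HOL-Analysis.Analysis"
begin

definition pd :: "nat \<Rightarrow> (real \<Rightarrow> real \<Rightarrow> real \<Rightarrow> real) \<Rightarrow> real \<Rightarrow> real \<Rightarrow> real \<Rightarrow> real" where
  "pd i h x1 x2 x3 =
     (if i = 1 then deriv (\<lambda>t. h t x2 x3) x1
      else if i = 2 then deriv (\<lambda>t. h x1 t x3) x2
      else deriv (\<lambda>t. h x1 x2 t) x3)"

fun iter_pd :: "nat list \<Rightarrow> (real \<Rightarrow> real \<Rightarrow> real \<Rightarrow> real) \<Rightarrow> real \<Rightarrow> real \<Rightarrow> real \<Rightarrow> real" where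
  "iter_pd [] h = h"
| "iter_pd (i # is) h = pd i (iter_pd is h)"

definition smooth3 :: "(real \<Rightarrow> real \<Rightarrow> real \<Rightarrow> real) \<Rightarrow> bool" where
  "smooth3 h \<longleftrightarrow> (\<forall>is. set is \<subseteq> {1,2,3} \<longrightarrow>
      continuous_on UNIV (\<lambda>(x1, x2, x3). iter_pd is h x1 x2 x3) \<and>
      (\<forall>x1 x2 x3. (\<lambda>t. iter_pd is h t x2 x3) differentiable (at x1) \<and>
                   (\<lambda>t. iter_pd is h x1 t x3) differentiable (at x2) \<and>
                   (\<lambda>t. iter_pd is h x1 x2 t) differentiable (at x3)))"

definition smooth1 :: "(real \<Rightarrow> real) \<Rightarrow> bool" where
  "smooth1 f \<longleftrightarrow> (\<forall>n x. (deriv ^^ n) f differentiable (at x))"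

text \<open>Coordinate expression of the Lie derivative (L_W g)_{ij} of a (0,2)-tensor g with
  components g i j along the vector field with coordinate components W k:
  (L_W g)_{ij} = sum_k (W^k d_k g_{ij} + g_{kj} d_i W^k + g_{ik} d_j W^k).\<close>
definition lie_metric ::
  "(nat \<Rightarrow> nat \<Rightarrow> real \<Rightarrow> real \<Rightarrow> real \<Rightarrow> real) \<Rightarrow> (nat \<Rightarrow> real \<Rightarrow> real \<Rightarrow> real \<Rightarrow> real)
   \<Rightarrow> nat \<Rightarrow> nat \<Rightarrow> real \<Rightarrow> real \<Rightarrow> real \<Rightarrow> real" where
  "lie_metric g W i j x1 x2 x3 =
     (\<Sum>k\<in>{1,2,3}. W k x1 x2 x3 * pd k (g i j) x1 x2 x3
                  + g k j x1 x2 x3 * pd i (W k) x1 x2 x3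
                  + g i k x1 x2 x3 * pd j (W k) x1 x2 x3)"

definition is_killing ::
  "(nat \<Rightarrow> nat \<Rightarrow> real \<Rightarrow> real \<Rightarrow> real \<Rightarrow> real) \<Rightarrow> (nat \<Rightarrow> real \<Rightarrow> real \<Rightarrow> real \<Rightarrow> real) \<Rightarrow> bool" where
  "is_killing g W \<longleftrightarrow> (\<forall>i\<in>{1,2,3}. \<forall>j\<in>{1,2,3}. \<forall>x1 x2 x3. lie_metric g W i j x1 x2 x3 = 0)"

end

theory Submission
  imports Defs
begin


lemma smooth3_D:
  assumes "smooth3 V" "set ls \<subseteq> {1,2,3}"
  shows "((\<lambda>t. iter_pd ls V t b c) has_real_derivative iter_pd (1#ls) V a b c) (at a)"
    and "((\<lambda>t. iter_pd ls V a t c) has_real_derivative iter_pd (2#ls) V a b c) (at b)"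
    and "((\<lambda>t. iter_pd ls V a b t) has_real_derivative iter_pd (3#ls) V a b c) (at c)"
  using assms unfolding smooth3_def
  by (auto simp: pd_def DERIV_deriv_iff_real_differentiable)

lemma smooth1_D:
  assumes "smooth1 f"
  shows "(f has_real_derivative deriv f x) (at x)" "(deriv f has_real_derivative deriv (deriv f) x) (at x)"
proof -
  have "(deriv ^^ 0) f differentiable (at x)" "(deriv ^^ 1) f differentiable (at x)"
    using assms unfolding smooth1_def by blast+
  then show "(f has_real_derivative deriv f x) (at x)" "(deriv f has_real_derivative deriv (deriv f) x) (at x)"
    by (auto simp: DERIV_deriv_iff_real_differentiable)
qed

lemma killing_iff:
  fixes W :: "nat \<Rightarrow> real \<Rightarrow> real \<Rightarrow> real \<Rightarrow> real" and D :: "nat \<Rightarrow> nat \<Rightarrow> real \<Rightarrow> real \<Rightarrow> real \<Rightarrow> real"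
  assumes f2d: "\<And>x. (f2 has_real_derivative f2' x) (at x)" and nz: "\<And>x. f2 x \<noteq> 0"
  and d1: "\<And>k x1 x2 x3. ((\<lambda>t. W k t x2 x3) has_real_derivative D 1 k x1 x2 x3) (at x1)"
  and d2: "\<And>k x1 x2 x3. ((\<lambda>t. W k x1 t x3) has_real_derivative D 2 k x1 x2 x3) (at x2)"
  and d3: "\<And>k x1 x2 x3. ((\<lambda>t. W k x1 x2 t) has_real_derivative D 3 k x1 x2 x3) (at x3)"
  shows "is_killing (\<lambda>i j x1 x2 x3. if i \<noteq> j then 0
                           else if i = 1 then 1 / k1\<^sup>2
                           else if i = 2 then 1 / (f2 x1)\<^sup>2
                           else 1 / k3\<^sup>2) W \<longleftrightarrow>
    (\<forall>x1 x2 x3. 2 / k1\<^sup>2 * D 1 1 x1 x2 x3 = 0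
      \<and> W 1 x1 x2 x3 * (- 2 * f2' x1 / f2 x1 ^ 3) + 2 / (f2 x1)\<^sup>2 * D 2 2 x1 x2 x3 = 0
      \<and> 2 / k3\<^sup>2 * D 3 3 x1 x2 x3 = 0
      \<and> 1 / (f2 x1)\<^sup>2 * D 1 2 x1 x2 x3 + 1 / k1\<^sup>2 * D 2 1 x1 x2 x3 = 0
      \<and> 1 / k3\<^sup>2 * D 1 3 x1 x2 x3 + 1 / k1\<^sup>2 * D 3 1 x1 x2 x3 = 0
      \<and> 1 / k3\<^sup>2 * D 2 3 x1 x2 x3 + 1 / (f2 x1)\<^sup>2 * D 3 2 x1 x2 x3 = 0)"
proof -
  have pW: "pd i (W k) x1 x2 x3 = D i k x1 x2 x3" if "i \<in> {1,2,3}" for i k x1 x2 x3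
    using that d1 d2 d3 by (auto simp: pd_def DERIV_imp_deriv)
  have pc: "pd i (\<lambda>x1 x2 x3. c) = (\<lambda>x1 x2 x3. 0)" for i and c :: real
    by (simp add: pd_def fun_eq_iff)
  have g22: "((\<lambda>t. 1 / (f2 t)\<^sup>2) has_real_derivative (- 2 * f2' x / f2 x ^ 3)) (at x)" for x
    using nz[of x] by (auto intro!: derivative_eq_intros f2d simp: field_simps power2_eq_square power3_eq_cube)
  have p22: "pd i (\<lambda>x1 x2 x3. 1 / (f2 x1)\<^sup>2) x1 x2 x3 = (if i = 1 then - 2 * f2' x1 / f2 x1 ^ 3 else 0)" for i x1 x2 x3
    using g22 by (simp add: pd_def DERIV_imp_deriv)
  let ?G = "(\<lambda>i j x1 x2 x3. if i \<noteq> j then 0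
                           else if i = 1 then 1 / k1\<^sup>2
                           else if i = 2 then 1 / (f2 x1)\<^sup>2
                           else 1 / k3\<^sup>2) :: nat \<Rightarrow> nat \<Rightarrow> real \<Rightarrow> real \<Rightarrow> real \<Rightarrow> real"
  have e: "lie_metric ?G W 1 1 x1 x2 x3 = 2 / k1\<^sup>2 * D 1 1 x1 x2 x3"
     "lie_metric ?G W 2 2 x1 x2 x3 = W 1 x1 x2 x3 * (- 2 * f2' x1 / f2 x1 ^ 3) + 2 / (f2 x1)\<^sup>2 * D 2 2 x1 x2 x3"
     "lie_metric ?G W 3 3 x1 x2 x3 = 2 / k3\<^sup>2 * D 3 3 x1 x2 x3"
     "lie_metric ?G W 1 2 x1 x2 x3 = 1 / (f2 x1)\<^sup>2 * D 1 2 x1 x2 x3 + 1 / k1\<^sup>2 * D 2 1 x1 x2 x3"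
     "lie_metric ?G W 2 1 x1 x2 x3 = 1 / (f2 x1)\<^sup>2 * D 1 2 x1 x2 x3 + 1 / k1\<^sup>2 * D 2 1 x1 x2 x3"
     "lie_metric ?G W 1 3 x1 x2 x3 = 1 / k3\<^sup>2 * D 1 3 x1 x2 x3 + 1 / k1\<^sup>2 * D 3 1 x1 x2 x3"
     "lie_metric ?G W 3 1 x1 x2 x3 = 1 / k3\<^sup>2 * D 1 3 x1 x2 x3 + 1 / k1\<^sup>2 * D 3 1 x1 x2 x3"
     "lie_metric ?G W 2 3 x1 x2 x3 = 1 / k3\<^sup>2 * D 2 3 x1 x2 x3 + 1 / (f2 x1)\<^sup>2 * D 3 2 x1 x2 x3"
     "lie_metric ?G W 3 2 x1 x2 x3 = 1 / k3\<^sup>2 * D 2 3 x1 x2 x3 + 1 / (f2 x1)\<^sup>2 * D 3 2 x1 x2 x3"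
     for x1 x2 x3
    unfolding lie_metric_def by (simp_all add: pW pc p22 algebra_simps)
  show ?thesis
    unfolding is_killing_def by (simp only: e ball_simps simp_thms all_conj_distrib) (intro iffI; elim conjE; intro conjI; assumption)
qed

lemma killing_V:
  fixes V1 V2 V3 Ax Ay Az Bx By Bz Cx Cy Cz :: "real \<Rightarrow> real \<Rightarrow> real \<Rightarrow> real"
  assumes hk1: "k1 \<noteq> 0" and hk3: "k3 \<noteq> 0"
  and f2d: "\<And>x. (f2 has_real_derivative f2' x) (at x)" and nz: "\<And>x. f2 x \<noteq> 0"
  and a1: "\<And>x1 x2 x3. ((\<lambda>t. V1 t x2 x3) has_real_derivative Ax x1 x2 x3) (at x1)"
  and a2: "\<And>x1 x2 x3. ((\<lambda>t. V1 x1 t x3) has_real_derivative Ay x1 x2 x3) (at x2)"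
  and a3: "\<And>x1 x2 x3. ((\<lambda>t. V1 x1 x2 t) has_real_derivative Az x1 x2 x3) (at x3)"
  and b1: "\<And>x1 x2 x3. ((\<lambda>t. f2 t * V2 t x2 x3) has_real_derivative Bx x1 x2 x3) (at x1)"
  and b2: "\<And>x1 x2 x3. ((\<lambda>t. V2 x1 t x3) has_real_derivative By x1 x2 x3) (at x2)"
  and b3: "\<And>x1 x2 x3. ((\<lambda>t. V2 x1 x2 t) has_real_derivative Bz x1 x2 x3) (at x3)"
  and c1: "\<And>x1 x2 x3. ((\<lambda>t. V3 t x2 x3) has_real_derivative Cx x1 x2 x3) (at x1)"
  and c2: "\<And>x1 x2 x3. ((\<lambda>t. V3 x1 t x3) has_real_derivative Cy x1 x2 x3) (at x2)"
  and c3: "\<And>x1 x2 x3. ((\<lambda>t. V3 x1 x2 t) has_real_derivative Cz x1 x2 x3) (at x3)"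
  shows "is_killing
           (\<lambda>i j x1 x2 x3. if i \<noteq> j then 0
                           else if i = 1 then 1 / k1\<^sup>2
                           else if i = 2 then 1 / (f2 x1)\<^sup>2
                           else 1 / k3\<^sup>2)
           (\<lambda>i x1 x2 x3. if i = 1 then k1 * V1 x1 x2 x3
                         else if i = 2 then f2 x1 * V2 x1 x2 x3
                         else k3 * V3 x1 x2 x3) \<longleftrightarrow>
    (\<forall>x1 x2 x3. Ax x1 x2 x3 = 0 \<and> Cz x1 x2 x3 = 0
       \<and> By x1 x2 x3 = k1 * V1 x1 x2 x3 * f2' x1 / (f2 x1)\<^sup>2
       \<and> Bx x1 x2 x3 / (f2 x1)\<^sup>2 + Ay x1 x2 x3 / k1 = 0
       \<and> Cx x1 x2 x3 / k3 + Az x1 x2 x3 / k1 = 0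
       \<and> Cy x1 x2 x3 / k3 + Bz x1 x2 x3 / f2 x1 = 0)"
proof -
  let ?W = "(\<lambda>(i::nat) x1 x2 x3. if i = 1 then k1 * V1 x1 x2 x3
                         else if i = 2 then f2 x1 * V2 x1 x2 x3
                         else k3 * V3 x1 x2 x3)"
  define D where "D = (\<lambda>(i::nat) (k::nat) x1 x2 x3. if k = 1 then k1 * (if i = 1 then Ax x1 x2 x3 else if i = 2 then Ay x1 x2 x3 else Az x1 x2 x3)
     else if k = 2 then (if i = 1 then Bx x1 x2 x3 else if i = 2 then f2 x1 * By x1 x2 x3 else f2 x1 * Bz x1 x2 x3)
     else k3 * (if i = 1 then Cx x1 x2 x3 else if i = 2 then Cy x1 x2 x3 else Cz x1 x2 x3))"
  have d1: "((\<lambda>t. ?W k t x2 x3) has_real_derivative D 1 k x1 x2 x3) (at x1)" for k x1 x2 x3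
    unfolding D_def using a1 b1 c1 by (auto intro!: derivative_eq_intros)
  have d2: "((\<lambda>t. ?W k x1 t x3) has_real_derivative D 2 k x1 x2 x3) (at x2)" for k x1 x2 x3
    unfolding D_def using a2 b2 c2
    by (auto intro!: derivative_eq_intros)
  have d3: "((\<lambda>t. ?W k x1 x2 t) has_real_derivative D 3 k x1 x2 x3) (at x3)" for k x1 x2 x3
    unfolding D_def using a3 b3 c3
    by (auto intro!: derivative_eq_intros)
  have *: "\<And>x1 x2 x3. (2 / k1\<^sup>2 * D 1 1 x1 x2 x3 = 0
      \<and> ?W 1 x1 x2 x3 * (- 2 * f2' x1 / f2 x1 ^ 3) + 2 / (f2 x1)\<^sup>2 * D 2 2 x1 x2 x3 = 0
      \<and> 2 / k3\<^sup>2 * D 3 3 x1 x2 x3 = 0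
      \<and> 1 / (f2 x1)\<^sup>2 * D 1 2 x1 x2 x3 + 1 / k1\<^sup>2 * D 2 1 x1 x2 x3 = 0
      \<and> 1 / k3\<^sup>2 * D 1 3 x1 x2 x3 + 1 / k1\<^sup>2 * D 3 1 x1 x2 x3 = 0
      \<and> 1 / k3\<^sup>2 * D 2 3 x1 x2 x3 + 1 / (f2 x1)\<^sup>2 * D 3 2 x1 x2 x3 = 0) \<longleftrightarrow>
     (Ax x1 x2 x3 = 0 \<and> Cz x1 x2 x3 = 0
       \<and> By x1 x2 x3 = k1 * V1 x1 x2 x3 * f2' x1 / (f2 x1)\<^sup>2
       \<and> Bx x1 x2 x3 / (f2 x1)\<^sup>2 + Ay x1 x2 x3 / k1 = 0
       \<and> Cx x1 x2 x3 / k3 + Az x1 x2 x3 / k1 = 0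
       \<and> Cy x1 x2 x3 / k3 + Bz x1 x2 x3 / f2 x1 = 0)"
  proof -
    fix x1 x2 x3
    have nz1: "f2 x1 \<noteq> 0" by (rule nz)
    have e1: "2 / k1\<^sup>2 * D 1 1 x1 x2 x3 = 0 \<longleftrightarrow> Ax x1 x2 x3 = 0" using hk1 by (simp add: D_def)
    have e2: "?W 1 x1 x2 x3 * (- 2 * f2' x1 / f2 x1 ^ 3) + 2 / (f2 x1)\<^sup>2 * D 2 2 x1 x2 x3 = 0
        \<longleftrightarrow> By x1 x2 x3 = k1 * V1 x1 x2 x3 * f2' x1 / (f2 x1)\<^sup>2"
      using nz1 by (simp add: D_def field_simps power2_eq_square power3_eq_cube)
    have e3: "2 / k3\<^sup>2 * D 3 3 x1 x2 x3 = 0 \<longleftrightarrow> Cz x1 x2 x3 = 0" using hk3 by (simp add: D_def)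
    have e4: "1 / (f2 x1)\<^sup>2 * D 1 2 x1 x2 x3 + 1 / k1\<^sup>2 * D 2 1 x1 x2 x3 = 0 \<longleftrightarrow>
        Bx x1 x2 x3 / (f2 x1)\<^sup>2 + Ay x1 x2 x3 / k1 = 0"
      using hk1 by (simp add: D_def power2_eq_square)
    have e5: "1 / k3\<^sup>2 * D 1 3 x1 x2 x3 + 1 / k1\<^sup>2 * D 3 1 x1 x2 x3 = 0 \<longleftrightarrow> Cx x1 x2 x3 / k3 + Az x1 x2 x3 / k1 = 0"
      using hk1 hk3 by (simp add: D_def power2_eq_square)
    have e6: "1 / k3\<^sup>2 * D 2 3 x1 x2 x3 + 1 / (f2 x1)\<^sup>2 * D 3 2 x1 x2 x3 = 0 \<longleftrightarrow> Cy x1 x2 x3 / k3 + Bz x1 x2 x3 / f2 x1 = 0"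
      using nz1 hk3 by (simp add: D_def power2_eq_square)
    show "?thesis x1 x2 x3" using e1 e2 e3 e4 e5 e6 by blast
  qed
  show ?thesis
    by (subst killing_iff[of f2 f2' ?W D, OF f2d nz d1 d2 d3]) (simp only: *)
qed



lemma const_of_deriv0:
  fixes f :: "real \<Rightarrow> real"
  assumes "\<And>x. (f has_real_derivative 0) (at x)"
  shows "f x = f y"
  using DERIV_isconst_all assms by blast

lemma lin_of_deriv_const:
  fixes f :: "real \<Rightarrow> real"
  assumes "\<And>x. (f has_real_derivative c) (at x)"
  shows "f x = c * x + f 0"
proof -
  have "\<And>x. ((\<lambda>x. f x - c * x) has_real_derivative 0) (at x)"
    using assms by (auto intro!: derivative_eq_intros)
  from const_of_deriv0[OF this, of x 0] show ?thesis by simp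
qed

lemma ode_zero_cos:
  fixes E E1 :: "real \<Rightarrow> real"
  assumes s: "s \<noteq> 0"
  and d: "\<And>x. (E has_real_derivative E1 x) (at x)"
  and d1: "\<And>x. (E1 has_real_derivative (- s\<^sup>2 * E x)) (at x)"
  and z: "E 0 = 0" "E1 0 = 0"
  shows "E x = 0"
proof -
  have "\<And>x. ((\<lambda>x. (E1 x)\<^sup>2 + s\<^sup>2 * (E x)\<^sup>2) has_real_derivative 0) (at x)"
    using d d1 by (auto intro!: derivative_eq_intros simp: algebra_simps power2_eq_square)
  from const_of_deriv0[OF this, of x 0] z have "(E1 x)\<^sup>2 + s\<^sup>2 * (E x)\<^sup>2 = 0" by simp
  then show ?thesis using s
    by (metis add_nonneg_eq_0_iff mult_eq_0_iff power_not_zero zero_le_power2 zero_le_mult_iff power_eq_0_iff)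
qed

lemma ode_zero_exp:
  fixes E E1 :: "real \<Rightarrow> real"
  assumes d: "\<And>x. (E has_real_derivative E1 x) (at x)"
  and d1: "\<And>x. (E1 has_real_derivative (s\<^sup>2 * E x)) (at x)"
  and z: "E 0 = 0" "E1 0 = 0"
  shows "E x = 0"
proof -
  have "\<And>x. ((\<lambda>x. (E1 x - s * E x) * exp (s * x)) has_real_derivative 0) (at x)"
    using d d1 by (auto intro!: derivative_eq_intros simp: algebra_simps power2_eq_square)
  from const_of_deriv0[OF this] z have P: "E1 y = s * E y" for y
    by (metis (no_types, lifting) exp_not_eq_zero mult_eq_0_iff mult_zero_left right_minus_eq)
  have "\<And>x. ((\<lambda>x. E x * exp (- s * x)) has_real_derivative 0) (at x)"
    using d P by (auto intro!: derivative_eq_intros simp: algebra_simps)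
  from const_of_deriv0[OF this, of x 0] z show ?thesis by simp
qed

lemma ode_cos:
  fixes f f1 :: "real \<Rightarrow> real"
  assumes s: "s \<noteq> 0"
  and d: "\<And>x. (f has_real_derivative f1 x) (at x)"
  and d1: "\<And>x. (f1 has_real_derivative (- s\<^sup>2 * f x)) (at x)"
  shows "f x = f 0 * cos (s * x) + f1 0 / s * sin (s * x)"
proof -
  let ?E = "\<lambda>x. f x - (f 0 * cos (s * x) + f1 0 / s * sin (s * x))"
  let ?E1 = "\<lambda>x. f1 x - (- f 0 * s * sin (s * x) + f1 0 * cos (s * x))"
  have "?E x = 0"
  proof (rule ode_zero_cos[OF s, of ?E ?E1])
    show "(?E has_real_derivative ?E1 x) (at x)" for x
      using d s by (auto intro!: derivative_eq_intros simp: algebra_simps)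
    show "(?E1 has_real_derivative (- s\<^sup>2 * ?E x)) (at x)" for x
      using d1 s by (auto intro!: derivative_eq_intros simp: algebra_simps power2_eq_square)
  qed auto
  then show ?thesis by simp
qed

lemma ode_exp:
  fixes f f1 :: "real \<Rightarrow> real"
  assumes s: "s \<noteq> 0"
  and d: "\<And>x. (f has_real_derivative f1 x) (at x)"
  and d1: "\<And>x. (f1 has_real_derivative (s\<^sup>2 * f x)) (at x)"
  shows "f x = (f 0 + f1 0 / s) / 2 * exp (s * x) + (f 0 - f1 0 / s) / 2 * exp (- s * x)"
proof -
  define A where "A = (f 0 + f1 0 / s) / 2"
  define B where "B = (f 0 - f1 0 / s) / 2"
  have AB: "A + B = f 0" "A * s - B * s = f1 0" using s by (auto simp: A_def B_def field_simps)
  let ?E = "\<lambda>x. f x - (A * exp (s * x) + B * exp (- s * x))"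
  let ?E1 = "\<lambda>x. f1 x - (A * s * exp (s * x) - B * s * exp (- s * x))"
  have "?E x = 0"
  proof (rule ode_zero_exp[of ?E ?E1])
    show "(?E has_real_derivative ?E1 x) (at x)" for x
      using d s by (auto intro!: derivative_eq_intros simp: algebra_simps)
    show "(?E1 has_real_derivative (s\<^sup>2 * ?E x)) (at x)" for x
      using d1 s by (auto intro!: derivative_eq_intros simp: algebra_simps power2_eq_square)
  qed (use AB in auto)
  then show ?thesis by (simp add: A_def B_def)
qed



abbreviation GG :: "real \<Rightarrow> real \<Rightarrow> (real \<Rightarrow> real) \<Rightarrow> nat \<Rightarrow> nat \<Rightarrow> real \<Rightarrow> real \<Rightarrow> real \<Rightarrow> real" where
  "GG k1 k3 f2 \<equiv> (\<lambda>i j x1 x2 x3. if i \<noteq> j then 0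
                           else if i = 1 then 1 / k1\<^sup>2
                           else if i = 2 then 1 / (f2 x1)\<^sup>2
                           else 1 / k3\<^sup>2)"
abbreviation WW :: "real \<Rightarrow> real \<Rightarrow> (real \<Rightarrow> real) \<Rightarrow> (real \<Rightarrow> real \<Rightarrow> real \<Rightarrow> real) \<Rightarrow> (real \<Rightarrow> real \<Rightarrow> real \<Rightarrow> real) \<Rightarrow> (real \<Rightarrow> real \<Rightarrow> real \<Rightarrow> real) \<Rightarrow> nat \<Rightarrow> real \<Rightarrow> real \<Rightarrow> real \<Rightarrow> real" where
  "WW k1 k3 f2 V1 V2 V3 \<equiv> (\<lambda>i x1 x2 x3. if i = 1 then k1 * V1 x1 x2 x3
                         else if i = 2 then f2 x1 * V2 x1 x2 x3
                         else k3 * V3 x1 x2 x3)"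

lemma rev_i:
  assumes hk1: "k1 \<noteq> 0" and hk3: "k3 \<noteq> 0"
  and f2D: "\<And>x. (f2 has_real_derivative deriv f2 x) (at x)" and nz: "\<And>x. f2 x \<noteq> 0"
  and V: "\<forall>x1 x2 x3. V1 x1 x2 x3 = 0 \<and> V2 x1 x2 x3 = c1 / f2 x1 \<and> V3 x1 x2 x3 = c2"
  shows "is_killing (GG k1 k3 f2) (WW k1 k3 f2 V1 V2 V3)"
proof -
  have e: "V1 = (\<lambda>x1 x2 x3. 0)" "V2 = (\<lambda>x1 x2 x3. c1 / f2 x1)" "V3 = (\<lambda>x1 x2 x3. c2)"
    using V by (auto simp: fun_eq_iff)
  have u: "(\<lambda>t. f2 t * (c1 / f2 t)) = (\<lambda>t. c1)" using nz by (auto simp: fun_eq_iff)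
  show ?thesis unfolding e
    apply (rule killing_V[where Ax="\<lambda>_ _ _. 0" and Ay="\<lambda>_ _ _. 0" and Az="\<lambda>_ _ _. 0"
       and Bx="\<lambda>_ _ _. 0" and By="\<lambda>_ _ _. 0" and Bz="\<lambda>_ _ _. 0"
       and Cx="\<lambda>_ _ _. 0" and Cy="\<lambda>_ _ _. 0" and Cz="\<lambda>_ _ _. 0", THEN iffD2, OF hk1 hk3 f2D nz])
    apply (auto intro!: derivative_eq_intros)[3]
    subgoal for x1 x2 x3 by (subst u) simp
    by (auto intro!: derivative_eq_intros)
qed

lemma rev_ii:
  assumes hk1: "k1 \<noteq> 0" and hk3: "k3 \<noteq> 0" and nz: "\<And>x. f2 x \<noteq> 0"
  and f: "\<forall>x. f2 x = k2"
  and V: "\<forall>x1 x2 x3.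
           V1 x1 x2 x3 = c1 * x2 + c2 * x3 + c3 \<and>
           V2 x1 x2 x3 = - (c1 * k2 / k1) * x1 - c4 * k2 * x3 + c5 \<and>
           V3 x1 x2 x3 = - (c2 * k3 / k1) * x1 + c4 * k3 * x2 + c6"
  shows "is_killing (GG k1 k3 f2) (WW k1 k3 f2 V1 V2 V3)"
proof -
  have k2: "k2 \<noteq> 0" using nz f by metis
  have e: "V1 = (\<lambda>x1 x2 x3. c1 * x2 + c2 * x3 + c3)" "V2 = (\<lambda>x1 x2 x3. - (c1 * k2 / k1) * x1 - c4 * k2 * x3 + c5)"
     "V3 = (\<lambda>x1 x2 x3. - (c2 * k3 / k1) * x1 + c4 * k3 * x2 + c6)" "f2 = (\<lambda>_. k2)"
    using V f by (auto simp: fun_eq_iff)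
  have fD: "\<And>x. ((\<lambda>_. k2) has_real_derivative 0) (at x)" by simp
  show ?thesis unfolding e
    apply (rule killing_V[where Ax="\<lambda>_ _ _. 0" and Ay="\<lambda>_ _ _. c1" and Az="\<lambda>_ _ _. c2"
       and Bx="\<lambda>_ _ _. k2 * (- (c1 * k2 / k1))" and By="\<lambda>_ _ _. 0" and Bz="\<lambda>_ _ _. - c4 * k2"
       and Cx="\<lambda>_ _ _. - (c2 * k3 / k1)" and Cy="\<lambda>_ _ _. c4 * k3" and Cz="\<lambda>_ _ _. 0", THEN iffD2, OF hk1 hk3 fD])
    using k2 hk1 hk3 by (auto intro!: derivative_eq_intros simp: field_simps power2_eq_square)
qed

lemma rev_iii:
  assumes hk1: "k1 \<noteq> 0" and hk3: "k3 \<noteq> 0" and nz: "\<And>x. f2 x \<noteq> 0"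
  and F0D: "\<And>x. (F0 has_real_derivative (- (f2 x)\<^sup>2 / k1)) (at x)"
  and f: "\<forall>x. f2 x = a1 * exp (a2 * x)"
  and V: "\<forall>x1 x2 x3.
           V1 x1 x2 x3 = c1 * x2 + c2 \<and>
           V2 x1 x2 x3 = k1 * (deriv f2 x1 / (f2 x1)\<^sup>2) * (c1 / 2 * x2\<^sup>2 + c2 * x2 + c3)
                         + (c1 * F0 x1 + c4) / f2 x1 \<and>
           V3 x1 x2 x3 = c3"
  shows "is_killing (GG k1 k3 f2) (WW k1 k3 f2 V1 V2 V3)"
proof -
  have fe: "f2 = (\<lambda>x. a1 * exp (a2 * x))" using f by auto
  have f2D: "(f2 has_real_derivative a2 * f2 x) (at x)" for x
    unfolding fe by (auto intro!: derivative_eq_intros)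
  have dfe: "deriv f2 x = a2 * f2 x" for x using f2D by (simp add: DERIV_imp_deriv)
  have e: "V1 = (\<lambda>x1 x2 x3. c1 * x2 + c2)"
     "V2 = (\<lambda>x1 x2 x3. k1 * (a2 * f2 x1 / (f2 x1)\<^sup>2) * (c1 / 2 * x2\<^sup>2 + c2 * x2 + c3) + (c1 * F0 x1 + c4) / f2 x1)"
     "V3 = (\<lambda>x1 x2 x3. c3)"
    using V by (auto simp: fun_eq_iff dfe)
  have u: "(\<lambda>t. f2 t * (k1 * (a2 * f2 t / (f2 t)\<^sup>2) * (c1 / 2 * x2\<^sup>2 + c2 * x2 + c3) + (c1 * F0 t + c4) / f2 t))
     = (\<lambda>t. k1 * a2 * (c1 / 2 * x2\<^sup>2 + c2 * x2 + c3) + (c1 * F0 t + c4))" for x2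
    using nz by (auto simp: fun_eq_iff field_simps power2_eq_square)
  show ?thesis unfolding e
    apply (rule killing_V[where Ax="\<lambda>_ _ _. 0" and Ay="\<lambda>_ _ _. c1" and Az="\<lambda>_ _ _. 0"
       and Bx="\<lambda>x1 _ _. c1 * (- (f2 x1)\<^sup>2 / k1)" and By="\<lambda>x1 x2 _. k1 * (a2 * f2 x1 / (f2 x1)\<^sup>2) * (c1 * x2 + c2)" and Bz="\<lambda>_ _ _. 0"
       and Cx="\<lambda>_ _ _. 0" and Cy="\<lambda>_ _ _. 0" and Cz="\<lambda>_ _ _. 0", THEN iffD2, OF hk1 hk3 f2D nz])
    apply (auto intro!: derivative_eq_intros)[3]
    subgoal for x1 x2 x3 by (subst u) (auto intro!: derivative_eq_intros F0D)
    using hk1 nz by (auto intro!: derivative_eq_intros simp: field_simps power2_eq_square)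
qed

lemma h_deriv:
  assumes f2D: "\<And>x. (f2 has_real_derivative deriv f2 x) (at x)"
  and fpD: "\<And>x. (deriv f2 has_real_derivative deriv (deriv f2) x) (at x)"
  and nz: "\<And>x. f2 x \<noteq> 0"
  and kk: "\<forall>x. k1\<^sup>2 / (f2 x)\<^sup>2 * deriv (\<lambda>t. deriv f2 t / f2 t) x = k" and hk1: "k1 \<noteq> 0"
  shows "((\<lambda>t. deriv f2 t / f2 t) has_real_derivative k * (f2 x)\<^sup>2 / k1\<^sup>2) (at x)"
proof -
  have d: "((\<lambda>t. deriv f2 t / f2 t) has_real_derivative
     (deriv (deriv f2) x * f2 x - deriv f2 x * deriv f2 x) / (f2 x * f2 x)) (at x)" for x
    using nz[of x] by (auto intro!: derivative_eq_intros f2D fpD)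
  then have "deriv (\<lambda>t. deriv f2 t / f2 t) x = (deriv (deriv f2) x * f2 x - deriv f2 x * deriv f2 x) / (f2 x * f2 x)"
    by (rule DERIV_imp_deriv)
  moreover have "deriv (\<lambda>t. deriv f2 t / f2 t) x = k * (f2 x)\<^sup>2 / k1\<^sup>2"
    using kk[rule_format, of x] nz[of x] hk1 by (auto simp: field_simps)
  ultimately show ?thesis using d[of x] by simp
qed

lemma rev_iv:
  assumes hk1: "k1 \<noteq> 0" and hk3: "k3 \<noteq> 0"
  and f2D: "\<And>x. (f2 has_real_derivative deriv f2 x) (at x)"
  and fpD: "\<And>x. (deriv f2 has_real_derivative deriv (deriv f2) x) (at x)"
  and nz: "\<And>x. f2 x \<noteq> 0"
  and F0D: "\<And>x. (F0 has_real_derivative (- (f2 x)\<^sup>2 / k1)) (at x)"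
  and kpos: "0 < k" and kk: "\<forall>x. k1\<^sup>2 / (f2 x)\<^sup>2 * deriv (\<lambda>t. deriv f2 t / f2 t) x = k"
  and V: "\<forall>x1 x2 x3.
           V1 x1 x2 x3 = c1 * cos (sqrt k * x2) + c2 * sin (sqrt k * x2) \<and>
           V2 x1 x2 x3 = k1 * (deriv f2 x1 / (f2 x1)\<^sup>2) *
                           (1 / sqrt k * (c1 * sin (sqrt k * x2) - c2 * cos (sqrt k * x2)) + c3)
                         + (c3 * k * F0 x1 + c4) / f2 x1 \<and>
           V3 x1 x2 x3 = c3"
  shows "is_killing (GG k1 k3 f2) (WW k1 k3 f2 V1 V2 V3)"
proof -
  have hD: "((\<lambda>t. deriv f2 t / f2 t) has_real_derivative k * (f2 x)\<^sup>2 / k1\<^sup>2) (at x)" for x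
    by (rule h_deriv[OF f2D fpD nz kk hk1])
  define s where "s = sqrt k"
  have s: "s > 0" "k = s\<^sup>2" using kpos by (auto simp: s_def)
  let ?P = "\<lambda>x2. 1 / s * (c1 * sin (s * x2) - c2 * cos (s * x2)) + c3"
  have e: "V1 = (\<lambda>x1 x2 x3. c1 * cos (s * x2) + c2 * sin (s * x2))"
     "V2 = (\<lambda>x1 x2 x3. k1 * (deriv f2 x1 / (f2 x1)\<^sup>2) * ?P x2 + (c3 * k * F0 x1 + c4) / f2 x1)"
     "V3 = (\<lambda>x1 x2 x3. c3)"
    using V by (auto simp: fun_eq_iff s_def)
  have u: "(\<lambda>t. f2 t * (k1 * (deriv f2 t / (f2 t)\<^sup>2) * ?P x2 + (c3 * k * F0 t + c4) / f2 t))
     = (\<lambda>t. (k1 * ?P x2) * (deriv f2 t / f2 t) + (c3 * k) * F0 t + c4)" for x2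
    using nz by (auto simp: fun_eq_iff field_simps power2_eq_square)
  show ?thesis unfolding e
    apply (rule killing_V[where Ax="\<lambda>_ _ _. 0" and Ay="\<lambda>_ x2 _. - c1 * s * sin (s * x2) + c2 * s * cos (s * x2)" and Az="\<lambda>_ _ _. 0"
       and Bx="\<lambda>x1 x2 _. k1 * (k * (f2 x1)\<^sup>2 / k1\<^sup>2) * ?P x2 + c3 * k * (- (f2 x1)\<^sup>2 / k1)"
       and By="\<lambda>x1 x2 _. k1 * (deriv f2 x1 / (f2 x1)\<^sup>2) * (1 / s * (c1 * s * cos (s * x2) + c2 * s * sin (s * x2)))"
       and Bz="\<lambda>_ _ _. 0"
       and Cx="\<lambda>_ _ _. 0" and Cy="\<lambda>_ _ _. 0" and Cz="\<lambda>_ _ _. 0", THEN iffD2, OF hk1 hk3 f2D nz])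
    apply (auto intro!: derivative_eq_intros)[3]
    subgoal for x1 x2 x3
      apply (subst u)
      using DERIV_add[OF DERIV_add[OF DERIV_cmult[OF hD[of x1], of "k1 * ?P x2"] DERIV_cmult[OF F0D[of x1], of "c3*k"]] DERIV_const[of c4 "at x1"]]
      by (simp add: algebra_simps)
    apply (auto intro!: derivative_eq_intros simp: algebra_simps)[5]
    using hk1 nz s by (auto simp: field_simps power2_eq_square) (simp_all add: power4_eq_xxxx algebra_simps)
qed

lemma rev_v:
  assumes hk1: "k1 \<noteq> 0" and hk3: "k3 \<noteq> 0"
  and f2D: "\<And>x. (f2 has_real_derivative deriv f2 x) (at x)"
  and fpD: "\<And>x. (deriv f2 has_real_derivative deriv (deriv f2) x) (at x)"
  and nz: "\<And>x. f2 x \<noteq> 0"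
  and F0D: "\<And>x. (F0 has_real_derivative (- (f2 x)\<^sup>2 / k1)) (at x)"
  and kneg: "k < 0" and kk: "\<forall>x. k1\<^sup>2 / (f2 x)\<^sup>2 * deriv (\<lambda>t. deriv f2 t / f2 t) x = k"
  and V: "\<forall>x1 x2 x3.
           V1 x1 x2 x3 = c1 * exp (sqrt (- k) * x2) + c2 * exp (- sqrt (- k) * x2) \<and>
           V2 x1 x2 x3 = k1 * (deriv f2 x1 / (f2 x1)\<^sup>2) *
                           (1 / sqrt (- k) * (c1 * exp (sqrt (- k) * x2) - c2 * exp (- sqrt (- k) * x2)) + c3)
                         + (c3 * k * F0 x1 + c4) / f2 x1 \<and>
           V3 x1 x2 x3 = c3"
  shows "is_killing (GG k1 k3 f2) (WW k1 k3 f2 V1 V2 V3)"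
proof -
  have hD: "((\<lambda>t. deriv f2 t / f2 t) has_real_derivative k * (f2 x)\<^sup>2 / k1\<^sup>2) (at x)" for x
    by (rule h_deriv[OF f2D fpD nz kk hk1])
  define s where "s = sqrt (- k)"
  have s: "s > 0" "k = - s\<^sup>2" using kneg by (auto simp: s_def)
  let ?P = "\<lambda>x2. 1 / s * (c1 * exp (s * x2) - c2 * exp (- s * x2)) + c3"
  have e: "V1 = (\<lambda>x1 x2 x3. c1 * exp (s * x2) + c2 * exp (- s * x2))"
     "V2 = (\<lambda>x1 x2 x3. k1 * (deriv f2 x1 / (f2 x1)\<^sup>2) * ?P x2 + (c3 * k * F0 x1 + c4) / f2 x1)"
     "V3 = (\<lambda>x1 x2 x3. c3)"
    using V by (auto simp: fun_eq_iff s_def)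
  have u: "(\<lambda>t. f2 t * (k1 * (deriv f2 t / (f2 t)\<^sup>2) * ?P x2 + (c3 * k * F0 t + c4) / f2 t))
     = (\<lambda>t. (k1 * ?P x2) * (deriv f2 t / f2 t) + (c3 * k) * F0 t + c4)" for x2
    using nz by (auto simp: fun_eq_iff field_simps power2_eq_square)
  show ?thesis unfolding e
    apply (rule killing_V[where Ax="\<lambda>_ _ _. 0" and Ay="\<lambda>_ x2 _. c1 * s * exp (s * x2) - c2 * s * exp (- s * x2)" and Az="\<lambda>_ _ _. 0"
       and Bx="\<lambda>x1 x2 _. k1 * (k * (f2 x1)\<^sup>2 / k1\<^sup>2) * ?P x2 + c3 * k * (- (f2 x1)\<^sup>2 / k1)"
       and By="\<lambda>x1 x2 _. k1 * (deriv f2 x1 / (f2 x1)\<^sup>2) * (1 / s * (c1 * s * exp (s * x2) + c2 * s * exp (- s * x2)))"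
       and Bz="\<lambda>_ _ _. 0"
       and Cx="\<lambda>_ _ _. 0" and Cy="\<lambda>_ _ _. 0" and Cz="\<lambda>_ _ _. 0", THEN iffD2, OF hk1 hk3 f2D nz])
    apply (auto intro!: derivative_eq_intros)[3]
    subgoal for x1 x2 x3
      apply (subst u)
      using DERIV_add[OF DERIV_add[OF DERIV_cmult[OF hD[of x1], of "k1 * ?P x2"] DERIV_cmult[OF F0D[of x1], of "c3*k"]] DERIV_const[of c4 "at x1"]]
      by (simp add: algebra_simps)
    apply (auto intro!: derivative_eq_intros simp: algebra_simps)[5]
    using hk1 nz s by (auto simp: field_simps power2_eq_square) (simp_all add: power4_eq_xxxx algebra_simps)
qed



lemma two_var_const:
  fixes Z :: "real \<Rightarrow> real \<Rightarrow> real"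
  assumes d1: "\<And>x1 x2. ((\<lambda>t. Z t x2) has_real_derivative 0) (at x1)"
  and d2: "\<And>x1 x2. ((\<lambda>t. Z x1 t) has_real_derivative 0) (at x2)"
  shows "Z x1 x2 = Z 0 0"
proof -
  have "Z x1 x2 = Z 0 x2" using const_of_deriv0[of "\<lambda>t. Z t x2", OF d1] by blast
  also have "\<dots> = Z 0 0" using const_of_deriv0[of "\<lambda>t. Z 0 t", OF d2] by blast
  finally show ?thesis .
qed

lemma U_const:
  fixes U :: "real \<Rightarrow> real \<Rightarrow> real"
  assumes U1: "\<And>x1 x2. ((\<lambda>t. U t x2) has_real_derivative - (f2 x1)\<^sup>2 / k1 * al1 x2) (at x1)"
  and U2: "\<And>x1 x2. ((\<lambda>t. U x1 t) has_real_derivative k1 * h x1 * al x2) (at x2)"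
  and hD: "\<And>x. (h has_real_derivative hp x) (at x)"
  and F0D: "\<And>x. (F0 has_real_derivative (- (f2 x)\<^sup>2 / k1)) (at x)"
  and PD: "\<And>x. (P has_real_derivative al x) (at x)"
  and key: "\<And>x1 x2. - (f2 x1)\<^sup>2 / k1 * al1 x2 = k1 * hp x1 * P x2 + m * (- (f2 x1)\<^sup>2 / k1)"
  shows "U x1 x2 = k1 * h x1 * P x2 + m * F0 x1 + (U 0 0 - k1 * h 0 * P 0 - m * F0 0)"
proof -
  let ?Z = "\<lambda>x1 x2. U x1 x2 - (k1 * P x2) * h x1 - m * F0 x1"
  have "?Z x1 x2 = ?Z 0 0"
  proof (rule two_var_const)
    show "((\<lambda>t. ?Z t x2) has_real_derivative 0) (at x1)" for x1 x2
    proof -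
      have "((\<lambda>t. ?Z t x2) has_real_derivative (- (f2 x1)\<^sup>2 / k1 * al1 x2 - (k1 * P x2) * hp x1 - m * (- (f2 x1)\<^sup>2 / k1))) (at x1)"
        by (intro DERIV_diff U1 DERIV_cmult hD F0D)
      moreover have "- (f2 x1)\<^sup>2 / k1 * al1 x2 - (k1 * P x2) * hp x1 - m * (- (f2 x1)\<^sup>2 / k1) = 0"
        using key[of x1 x2] by (simp add: algebra_simps)
      ultimately show ?thesis by simp
    qed
    show "((\<lambda>t. ?Z x1 t) has_real_derivative 0) (at x2)" for x1 x2
      using U2[of x1 x2] PD[of x2]
      by (auto intro!: derivative_eq_intros)
  qed
  then show ?thesis by (simp add: algebra_simps)
qed



lemma lin_sep:
  fixes d q g f z g1 p a k :: real
  assumes "(d * (q + g) + f * (z + g1)) / f\<^sup>2 + (p + a) / k = 0" "(d * g + f * g1) / f\<^sup>2 + a / k = 0"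
  shows "(d * q + f * z) / f\<^sup>2 + p / k = 0"
proof -
  have "d * (q + g) + f * (z + g1) = (d * q + f * z) + (d * g + f * g1)" by (simp add: algebra_simps)
  then have "(d * (q + g) + f * (z + g1)) / f\<^sup>2 = (d * q + f * z) / f\<^sup>2 + (d * g + f * g1) / f\<^sup>2"
    by (simp add: add_divide_distrib)
  moreover have "(p + a) / k = p / k + a / k" by (simp add: add_divide_distrib)
  ultimately show ?thesis using assms by linarith
qed

lemma deriv_const_zero:
  fixes f :: "real \<Rightarrow> real"
  assumes "(f has_real_derivative D) (at x)" "\<And>y. f y = c"
  shows "D = 0"
proof -
  have "f = (\<lambda>_. c)" using assms(2) by auto
  then show ?thesis using assms(1) DERIV_const[of c "at x"] DERIV_unique by metis
qed

lemma forward: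
  assumes hk1: "k1 \<noteq> 0" and hk3: "k3 \<noteq> 0"
  and f2D: "\<And>x. (f2 has_real_derivative deriv f2 x) (at x)"
  and fpD: "\<And>x. (deriv f2 has_real_derivative deriv (deriv f2) x) (at x)"
  and nz: "\<And>x. f2 x \<noteq> 0"
  and F0D: "\<And>x. (F0 has_real_derivative (- (f2 x)\<^sup>2 / k1)) (at x)"
  and hV: "smooth3 V1" "smooth3 V2" "smooth3 V3"
  and K: "is_killing (GG k1 k3 f2) (WW k1 k3 f2 V1 V2 V3)"
  shows "((\<exists>c1 c2. \<forall>x1 x2 x3. V1 x1 x2 x3 = 0 \<and> V2 x1 x2 x3 = c1 / f2 x1 \<and> V3 x1 x2 x3 = c2)
   \<or> (\<exists>k2. (\<forall>x. f2 x = k2) \<and>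
        (\<exists>c1 c2 c3 c4 c5 c6. \<forall>x1 x2 x3.
           V1 x1 x2 x3 = c1 * x2 + c2 * x3 + c3 \<and>
           V2 x1 x2 x3 = - (c1 * k2 / k1) * x1 - c4 * k2 * x3 + c5 \<and>
           V3 x1 x2 x3 = - (c2 * k3 / k1) * x1 + c4 * k3 * x2 + c6))
   \<or> (\<exists>a1 a2. a1 \<noteq> 0 \<and> a2 \<noteq> 0 \<and> (\<forall>x. f2 x = a1 * exp (a2 * x)) \<and>
        (\<exists>c1 c2 c3 c4. \<forall>x1 x2 x3.
           V1 x1 x2 x3 = c1 * x2 + c2 \<and>
           V2 x1 x2 x3 = k1 * (deriv f2 x1 / (f2 x1)\<^sup>2) * (c1 / 2 * x2\<^sup>2 + c2 * x2 + c3)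
                         + (c1 * F0 x1 + c4) / f2 x1 \<and>
           V3 x1 x2 x3 = c3))
   \<or> (\<exists>k. 0 < k \<and>
        (\<forall>x. k1\<^sup>2 / (f2 x)\<^sup>2 * deriv (\<lambda>t. deriv f2 t / f2 t) x = k) \<and>
        (\<exists>c1 c2 c3 c4. \<forall>x1 x2 x3.
           V1 x1 x2 x3 = c1 * cos (sqrt k * x2) + c2 * sin (sqrt k * x2) \<and>
           V2 x1 x2 x3 = k1 * (deriv f2 x1 / (f2 x1)\<^sup>2) *
                           (1 / sqrt k * (c1 * sin (sqrt k * x2) - c2 * cos (sqrt k * x2)) + c3)
                         + (c3 * k * F0 x1 + c4) / f2 x1 \<and>
           V3 x1 x2 x3 = c3))
   \<or> (\<exists>k. k < 0 \<and>
        (\<forall>x. k1\<^sup>2 / (f2 x)\<^sup>2 * deriv (\<lambda>t. deriv f2 t / f2 t) x = k) \<and>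
        (\<exists>c1 c2 c3 c4. \<forall>x1 x2 x3.
           V1 x1 x2 x3 = c1 * exp (sqrt (- k) * x2) + c2 * exp (- sqrt (- k) * x2) \<and>
           V2 x1 x2 x3 = k1 * (deriv f2 x1 / (f2 x1)\<^sup>2) *
                           (1 / sqrt (- k) * (c1 * exp (sqrt (- k) * x2) - c2 * exp (- sqrt (- k) * x2)) + c3)
                         + (c3 * k * F0 x1 + c4) / f2 x1 \<and>
           V3 x1 x2 x3 = c3)))"
proof -
  have s0: "set ([]::nat list) \<subseteq> {1,2,3}" and s2: "set [2::nat] \<subseteq> {1,2,3}"
    and s3: "set [3::nat] \<subseteq> {1,2,3}" and s23: "set [2::nat,3] \<subseteq> {1,2,3}" by auto
  note D1 = smooth3_D[OF hV(1) s0, simplified iter_pd.simps]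
  note D2 = smooth3_D[OF hV(2) s0, simplified iter_pd.simps]
  note D3 = smooth3_D[OF hV(3) s0, simplified iter_pd.simps]
  note D12 = smooth3_D[OF hV(1) s2, simplified iter_pd.simps]
  note D13 = smooth3_D[OF hV(1) s3, simplified iter_pd.simps]
  note D123 = smooth3_D[OF hV(1) s23, simplified iter_pd.simps]
  note D32 = smooth3_D[OF hV(3) s2, simplified iter_pd.simps]
  have b1: "((\<lambda>t. f2 t * V2 t x2 x3) has_real_derivative deriv f2 x1 * V2 x1 x2 x3 + f2 x1 * pd 1 V2 x1 x2 x3) (at x1)" for x1 x2 x3
    using DERIV_mult[OF f2D[of x1] D2(1)[where a=x1 and b=x2 and c=x3]] by (simp add: algebra_simps)
  have KE: "\<forall>x1 x2 x3. pd 1 V1 x1 x2 x3 = 0 \<and> pd 3 V3 x1 x2 x3 = 0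
       \<and> pd 2 V2 x1 x2 x3 = k1 * V1 x1 x2 x3 * deriv f2 x1 / (f2 x1)\<^sup>2
       \<and> (deriv f2 x1 * V2 x1 x2 x3 + f2 x1 * pd 1 V2 x1 x2 x3) / (f2 x1)\<^sup>2 + pd 2 V1 x1 x2 x3 / k1 = 0
       \<and> pd 1 V3 x1 x2 x3 / k3 + pd 3 V1 x1 x2 x3 / k1 = 0
       \<and> pd 2 V3 x1 x2 x3 / k3 + pd 3 V2 x1 x2 x3 / f2 x1 = 0"
    using killing_V[OF hk1 hk3 f2D nz D1(1) D1(2) D1(3) b1 D2(2) D2(3) D3(1) D3(2) D3(3)] K by blast
  have E11: "pd 1 V1 x1 x2 x3 = 0" and E33: "pd 3 V3 x1 x2 x3 = 0"
    and E22: "pd 2 V2 x1 x2 x3 = k1 * V1 x1 x2 x3 * deriv f2 x1 / (f2 x1)\<^sup>2"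
    and E12: "(deriv f2 x1 * V2 x1 x2 x3 + f2 x1 * pd 1 V2 x1 x2 x3) / (f2 x1)\<^sup>2 + pd 2 V1 x1 x2 x3 / k1 = 0"
    and E13: "pd 3 V1 x1 x2 x3 = - (k1 / k3) * pd 1 V3 x1 x2 x3"
    and E23: "pd 3 V2 x1 x2 x3 = - (f2 x1 / k3) * pd 2 V3 x1 x2 x3" for x1 x2 x3
  proof -
    have "pd 1 V3 x1 x2 x3 / k3 + pd 3 V1 x1 x2 x3 / k1 = 0" "pd 2 V3 x1 x2 x3 / k3 + pd 3 V2 x1 x2 x3 / f2 x1 = 0"
      using KE by blast+
    then show "pd 3 V1 x1 x2 x3 = - (k1 / k3) * pd 1 V3 x1 x2 x3" "pd 3 V2 x1 x2 x3 = - (f2 x1 / k3) * pd 2 V3 x1 x2 x3"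
      using hk1 hk3 nz[of x1] by (auto simp: field_simps)
  qed (use KE in blast)+

  have S1: "V1 x1 x2 x3 = V1 0 x2 x3" for x1 x2 x3
    using const_of_deriv0[of "\<lambda>t. V1 t x2 x3" x1 0] D1(1)[where b=x2 and c=x3] E11 by metis
  have S3: "V3 x1 x2 x3 = V3 x1 x2 0" for x1 x2 x3
    using const_of_deriv0[of "\<lambda>t. V3 x1 x2 t" x3 0] D3(3)[where a=x1 and b=x2] E33 by metis
  have P3: "pd 3 V1 x1 x2 x3 = pd 3 V1 0 x2 x3" for x1 x2 x3
  proof -
    have "(\<lambda>t. V1 x1 x2 t) = (\<lambda>t. V1 0 x2 t)" using S1 by auto
    then show ?thesis using D1(3)[where a=x1 and b=x2 and c=x3] D1(3)[where a=0 and b=x2 and c=x3] DERIV_unique by metis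
  qed
  have P1: "pd 1 V3 x1 x2 x3 = pd 1 V3 x1 x2 0" for x1 x2 x3
  proof -
    have "(\<lambda>t. V3 t x2 x3) = (\<lambda>t. V3 t x2 0)" using S3 by auto
    then show ?thesis using D3(1)[where a=x1 and b=x2 and c=x3] D3(1)[where a=x1 and b=x2 and c=0] DERIV_unique by metis
  qed
  define ps where "ps = (\<lambda>x2. pd 3 V1 0 x2 0)"
  have PS: "pd 3 V1 x1 x2 x3 = ps x2" for x1 x2 x3
  proof -
    have "pd 3 V1 x1 x2 x3 = pd 3 V1 0 x2 x3" by (rule P3)
    also have "\<dots> = - (k1 / k3) * pd 1 V3 0 x2 x3" by (rule E13)
    also have "\<dots> = - (k1 / k3) * pd 1 V3 0 x2 0" using P1 by simp
    also have "\<dots> = pd 3 V1 0 x2 0" using E13 by simp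
    finally show ?thesis by (simp add: ps_def)
  qed
  have PV3: "pd 1 V3 x1 x2 x3 = - (k3 / k1) * ps x2" for x1 x2 x3
    using E13[of x1 x2 x3] PS[of x1 x2 x3] hk1 hk3 by (auto simp: field_simps)
  define al where "al = (\<lambda>x2. V1 0 x2 0)"
  define be where "be = (\<lambda>x2. V3 0 x2 0)"
  have FV1: "V1 x1 x2 x3 = ps x2 * x3 + al x2" for x1 x2 x3
  proof -
    have "V1 0 x2 x3 = ps x2 * x3 + V1 0 x2 0"
      by (rule lin_of_deriv_const[of "\<lambda>t. V1 0 x2 t"]) (use D1(3)[where a=0 and b=x2] PS in simp)
    then show ?thesis unfolding al_def using S1[of x1 x2 x3] by linarith
  qed
  have FV3: "V3 x1 x2 x3 = - (k3 / k1) * ps x2 * x1 + be x2" for x1 x2 x3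
  proof -
    have "V3 x1 x2 0 = - (k3 / k1) * ps x2 * x1 + V3 0 x2 0"
      by (rule lin_of_deriv_const[of "\<lambda>t. V3 t x2 0"]) (use D3(1)[where b=x2 and c=0] PV3 in simp)
    then show ?thesis unfolding be_def using S3[of x1 x2 x3] by linarith
  qed
  define ps1 where "ps1 = (\<lambda>x2. pd 2 (pd 3 V1) 0 x2 0)"
  define ps2 where "ps2 = (\<lambda>x2. pd 2 (pd 2 (pd 3 V1)) 0 x2 0)"
  define al1 where "al1 = (\<lambda>x2. pd 2 V1 0 x2 0)"
  define al2 where "al2 = (\<lambda>x2. pd 2 (pd 2 V1) 0 x2 0)"
  define be1 where "be1 = (\<lambda>x2. pd 2 V3 0 x2 0)"
  define be2 where "be2 = (\<lambda>x2. pd 2 (pd 2 V3) 0 x2 0)"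
  have psD: "(ps has_real_derivative ps1 x) (at x)" for x
    unfolding ps_def ps1_def using D13(2)[where a=0 and c=0 and b=x] by simp
  have ps1D: "(ps1 has_real_derivative ps2 x) (at x)" for x
    unfolding ps1_def ps2_def using D123(2)[where a=0 and c=0 and b=x] by simp
  have alD: "(al has_real_derivative al1 x) (at x)" for x
    unfolding al_def al1_def using D1(2)[where a=0 and c=0 and b=x] by simp
  have al1D: "(al1 has_real_derivative al2 x) (at x)" for x
    unfolding al1_def al2_def using D12(2)[where a=0 and c=0 and b=x] by simp
  have beD: "(be has_real_derivative be1 x) (at x)" for x
    unfolding be_def be1_def using D3(2)[where a=0 and c=0 and b=x] by simp
  have be1D: "(be1 has_real_derivative be2 x) (at x)" for x
    unfolding be1_def be2_def using D32(2)[where a=0 and c=0 and b=x] by simp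
  have PV1_2: "pd 2 V1 x1 x2 x3 = ps1 x2 * x3 + al1 x2" for x1 x2 x3
  proof -
    have "(\<lambda>t. V1 x1 t x3) = (\<lambda>t. ps t * x3 + al t)" using FV1 by auto
    moreover have "((\<lambda>t. ps t * x3 + al t) has_real_derivative ps1 x2 * x3 + al1 x2) (at x2)"
      by (auto intro!: derivative_eq_intros psD alD)
    ultimately show ?thesis using D1(2)[where a=x1 and b=x2 and c=x3] DERIV_unique by metis
  qed
  have PV3_2: "pd 2 V3 x1 x2 x3 = - (k3 / k1) * ps1 x2 * x1 + be1 x2" for x1 x2 x3
  proof -
    have "(\<lambda>t. V3 x1 t x3) = (\<lambda>t. - (k3 / k1) * ps t * x1 + be t)" using FV3 by auto
    moreover have "((\<lambda>t. - (k3 / k1) * ps t * x1 + be t) has_real_derivative - (k3 / k1) * ps1 x2 * x1 + be1 x2) (at x2)"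
      using hk1 by (auto intro!: derivative_eq_intros psD beD)
    ultimately show ?thesis using D3(2)[where a=x1 and b=x2 and c=x3] DERIV_unique by metis
  qed
  define Q where "Q = (\<lambda>x1 x2. f2 x1 * (ps1 x2 * x1 / k1 - be1 x2 / k3))"
  define ga where "ga = (\<lambda>x1 x2. V2 x1 x2 0)"
  have PV2_3: "pd 3 V2 x1 x2 x3 = Q x1 x2" for x1 x2 x3
    using E23[of x1 x2 x3] PV3_2[of x1 x2 x3] hk1 hk3 by (simp add: Q_def field_simps)
  have FV2: "V2 x1 x2 x3 = Q x1 x2 * x3 + ga x1 x2" for x1 x2 x3
  proof -
    have "V2 x1 x2 x3 = Q x1 x2 * x3 + V2 x1 x2 0"
      by (rule lin_of_deriv_const[of "\<lambda>t. V2 x1 x2 t"]) (use D2(3)[where a=x1 and b=x2] PV2_3 in simp)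
    then show ?thesis by (simp add: ga_def)
  qed
  have PV2_2: "pd 2 V2 x1 x2 x3 = f2 x1 * (ps2 x2 * x1 / k1 - be2 x2 / k3) * x3 + pd 2 V2 x1 x2 0" for x1 x2 x3
  proof -
    have "(\<lambda>t. V2 x1 t x3) = (\<lambda>t. f2 x1 * (ps1 t * x1 / k1 - be1 t / k3) * x3 + V2 x1 t 0)"
      by (rule ext, subst FV2, simp only: Q_def ga_def)
    moreover have "((\<lambda>t. f2 x1 * (ps1 t * x1 / k1 - be1 t / k3) * x3 + V2 x1 t 0) has_real_derivative
         f2 x1 * (ps2 x2 * x1 / k1 - be2 x2 / k3) * x3 + pd 2 V2 x1 x2 0) (at x2)"
      using hk1 hk3 by (auto intro!: derivative_eq_intros ps1D be1D D2(2)[where a=x1 and c=0])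
    ultimately show ?thesis using D2(2)[where a=x1 and b=x2 and c=x3] DERIV_unique by metis
  qed
  have G2: "pd 2 V2 x1 x2 0 = k1 * al x2 * deriv f2 x1 / (f2 x1)\<^sup>2" for x1 x2
    using E22[of x1 x2 0] PV2_2[of x1 x2 0] FV1[of x1 x2 0] by simp
  have EA: "f2 x1 * (ps2 x2 * x1 / k1 - be2 x2 / k3) = k1 * ps x2 * deriv f2 x1 / (f2 x1)\<^sup>2" for x1 x2
    using E22[of x1 x2 1] PV2_2[of x1 x2 1] FV1[of x1 x2 1] G2[of x1 x2] by (simp add: add_divide_distrib algebra_simps)
  have PV2_1: "pd 1 V2 x1 x2 x3 = (deriv f2 x1 * (ps1 x2 * x1 / k1 - be1 x2 / k3) + f2 x1 * (ps1 x2 / k1)) * x3 + pd 1 V2 x1 x2 0" for x1 x2 x3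
  proof -
    have "(\<lambda>t. V2 t x2 x3) = (\<lambda>t. f2 t * (ps1 x2 * t / k1 - be1 x2 / k3) * x3 + V2 t x2 0)"
      by (rule ext, subst FV2, simp only: Q_def ga_def)
    moreover have "((\<lambda>t. f2 t * (ps1 x2 * t / k1 - be1 x2 / k3) * x3 + V2 t x2 0) has_real_derivative
         (deriv f2 x1 * (ps1 x2 * x1 / k1 - be1 x2 / k3) + f2 x1 * (ps1 x2 / k1)) * x3 + pd 1 V2 x1 x2 0) (at x1)"
      using hk1 hk3 by (auto intro!: derivative_eq_intros f2D D2(1)[where b=x2 and c=0] simp: field_simps)
    ultimately show ?thesis using D2(1)[where a=x1 and b=x2 and c=x3] DERIV_unique by metis
  qed
  have G1: "(deriv f2 x1 * ga x1 x2 + f2 x1 * pd 1 V2 x1 x2 0) / (f2 x1)\<^sup>2 + al1 x2 / k1 = 0" for x1 x2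
    using E12[of x1 x2 0] PV2_1[of x1 x2 0] FV2[of x1 x2 0] PV1_2[of x1 x2 0] by simp
  have EB: "deriv f2 x1 * (ps1 x2 * x1 / k1 - be1 x2 / k3) + f2 x1 * ps1 x2 / k1 = 0" for x1 x2
  proof -
    let ?X = "ps1 x2 * x1 / k1 - be1 x2 / k3"
    let ?Z = "deriv f2 x1 * ?X + f2 x1 * (ps1 x2 / k1)"
    have e1: "(deriv f2 x1 * (Q x1 x2 + ga x1 x2) + f2 x1 * (?Z + pd 1 V2 x1 x2 0)) / (f2 x1)\<^sup>2 + (ps1 x2 + al1 x2) / k1 = 0"
      using E12[of x1 x2 1] PV2_1[of x1 x2 1] FV2[of x1 x2 1] PV1_2[of x1 x2 1] by simp
    have "(deriv f2 x1 * Q x1 x2 + f2 x1 * ?Z) / (f2 x1)\<^sup>2 + ps1 x2 / k1 = 0"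
      by (rule lin_sep[OF e1 G1[of x1 x2]])
    then have "(2 * f2 x1 * (deriv f2 x1 * ?X + f2 x1 * ps1 x2 / k1)) / (f2 x1)\<^sup>2 = 0"
      using nz[of x1] by (simp add: Q_def field_simps power2_eq_square)
    then show ?thesis using nz[of x1] by simp
  qed
  have PS1: "ps1 y = 0" for y
  proof (rule ccontr)
    assume ne: "ps1 y \<noteq> 0"
    define x1 where "x1 = (be1 y / k3) * k1 / ps1 y"
    have "ps1 y * x1 / k1 - be1 y / k3 = 0" using ne hk1 by (simp add: x1_def)
    then have "f2 x1 * ps1 y / k1 = 0" using EB[of x1 y] by simp
    then show False using ne hk1 nz[of x1] by simp
  qed
  have ps1z: "ps1 = (\<lambda>_. 0)" using PS1 by auto
  have PS2: "ps2 y = 0" for y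
    using deriv_const_zero[OF ps1D[of y]] PS1 by blast
  have PSC: "ps y = ps 0" for y
    using const_of_deriv0[of ps y 0] psD PS1 by metis
  have EB': "deriv f2 x1 * be1 x2 = 0" for x1 x2
    using EB[of x1 x2] PS1[of x2] hk3 by simp
  show ?thesis
  proof (cases "\<forall>x. deriv f2 x = 0")
    case True
    define k2 where "k2 = f2 0"
    have FC: "f2 x = k2" for x
      unfolding k2_def using const_of_deriv0[of f2 x 0] f2D True by metis
    have k2nz: "k2 \<noteq> 0" using nz FC by metis
    have BE2: "be2 x = 0" for x
      using EA[of 0 x] True PS2[of x] nz[of 0] hk3 by simp
    have BE1: "be1 x = be1 0" for x
      using const_of_deriv0[of be1 x 0] be1D BE2 by metis
    have BEL: "be x = be1 0 * x + be 0" for x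
      by (rule lin_of_deriv_const) (use beD BE1 in metis)
    have GA: "V2 x1 x2 0 = V2 x1 0 0" for x1 x2
      using const_of_deriv0[of "\<lambda>t. V2 x1 t 0" x2 0] D2(2)[where a=x1 and c=0] G2 True by simp
    have P1C: "pd 1 V2 x1 x2 0 = pd 1 V2 x1 0 0" for x1 x2
    proof -
      have "(\<lambda>t. V2 t x2 0) = (\<lambda>t. V2 t 0 0)" using GA by auto
      then show ?thesis using D2(1)[where a=x1 and b=x2 and c=0] D2(1)[where a=x1 and b=0 and c=0] DERIV_unique by metis
    qed
    have AL1: "al1 x2 = - k1 * pd 1 V2 x1 0 0 / k2" for x1 x2
      using G1[of x1 x2] True P1C[of x1 x2] FC[of x1] k2nz hk1 by (simp add: field_simps power2_eq_square)
    have AL1C: "al1 x = al1 0" for x using AL1[of x 0] AL1[of 0 0] by simp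
    have ALL: "al x = al1 0 * x + al 0" for x
      by (rule lin_of_deriv_const) (use alD AL1C in metis)
    have GAL: "V2 x1 0 0 = - (k2 / k1) * al1 0 * x1 + V2 0 0 0" for x1
    proof (rule lin_of_deriv_const[of "\<lambda>t. V2 t 0 0"])
      fix x
      have "pd 1 V2 x 0 0 = - (k2 / k1) * al1 0" using AL1[of 0 x] k2nz hk1 by (simp add: field_simps)
      then show "((\<lambda>t. V2 t 0 0) has_real_derivative - (k2 / k1) * al1 0) (at x)"
        using D2(1)[where a=x and b=0 and c=0] by simp
    qed
    have "\<exists>k2. (\<forall>x. f2 x = k2) \<and>
        (\<exists>c1 c2 c3 c4 c5 c6. \<forall>x1 x2 x3.
           V1 x1 x2 x3 = c1 * x2 + c2 * x3 + c3 \<and>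
           V2 x1 x2 x3 = - (c1 * k2 / k1) * x1 - c4 * k2 * x3 + c5 \<and>
           V3 x1 x2 x3 = - (c2 * k3 / k1) * x1 + c4 * k3 * x2 + c6)"
    proof (intro exI conjI allI)
      show "f2 x = k2" for x by (rule FC)
      fix x1 x2 x3
      show "V1 x1 x2 x3 = al1 0 * x2 + ps 0 * x3 + al 0"
        using FV1[of x1 x2 x3] PSC[of x2] ALL[of x2] by simp
      show "V2 x1 x2 x3 = - (al1 0 * k2 / k1) * x1 - (be1 0 / k3) * k2 * x3 + V2 0 0 0"
        using FV2[of x1 x2 x3] GA[of x1 x2] GAL[of x1] FC[of x1] BE1[of x2] PS1[of x2] hk3
        by (simp add: Q_def ga_def field_simps)
      show "V3 x1 x2 x3 = - (ps 0 * k3 / k1) * x1 + (be1 0 / k3) * k3 * x2 + be 0"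
        using FV3[of x1 x2 x3] PSC[of x2] BEL[of x2] hk3 by simp
    qed
    then show ?thesis by blast
  next
    case False
    then obtain x0 where x0: "deriv f2 x0 \<noteq> 0" by blast
    have BE1Z: "be1 x = 0" for x using EB'[of x0 x] x0 by simp
    have BEC: "be x = be 0" for x using const_of_deriv0[of be x 0] beD BE1Z by metis
    have PSZ: "ps x2 = 0" for x2
      using EA[of x0 x2] PS2[of x2] deriv_const_zero[OF be1D[of x2]] BE1Z x0 nz[of x0] hk1 by simp
    have FV1': "V1 x1 x2 x3 = al x2" for x1 x2 x3 using FV1[of x1 x2 x3] PSZ by simp
    have FV3': "V3 x1 x2 x3 = be 0" for x1 x2 x3 using FV3[of x1 x2 x3] PSZ BEC by simp
    have FV2': "V2 x1 x2 x3 = V2 x1 x2 0" for x1 x2 x3 using FV2[of x1 x2 x3] PS1 BE1Z by (simp add: Q_def ga_def)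
    define h where "h = (\<lambda>t. deriv f2 t / f2 t)"
    define hp where "hp = (\<lambda>x. (deriv (deriv f2) x * f2 x - deriv f2 x * deriv f2 x) / (f2 x * f2 x))"
    have hD: "(h has_real_derivative hp x) (at x)" for x
      unfolding h_def hp_def using nz[of x] by (auto intro!: derivative_eq_intros f2D fpD)
    have hx0: "h x0 \<noteq> 0" using x0 nz[of x0] by (simp add: h_def)
    define U where "U = (\<lambda>x1 x2. f2 x1 * V2 x1 x2 0)"
    have U2: "((\<lambda>t. U x1 t) has_real_derivative k1 * h x1 * al x2) (at x2)" for x1 x2
    proof -
      have "((\<lambda>t. U x1 t) has_real_derivative f2 x1 * pd 2 V2 x1 x2 0) (at x2)"
        unfolding U_def by (intro DERIV_cmult D2(2))
      moreover have "f2 x1 * pd 2 V2 x1 x2 0 = k1 * h x1 * al x2"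
        using G2[of x1 x2] nz[of x1] by (simp add: h_def field_simps power2_eq_square)
      ultimately show ?thesis by simp
    qed
    have U1: "((\<lambda>t. U t x2) has_real_derivative - (f2 x1)\<^sup>2 / k1 * al1 x2) (at x1)" for x1 x2
    proof -
      have "((\<lambda>t. U t x2) has_real_derivative deriv f2 x1 * V2 x1 x2 0 + f2 x1 * pd 1 V2 x1 x2 0) (at x1)"
        unfolding U_def using DERIV_mult[OF f2D[of x1] D2(1)[where a=x1 and b=x2 and c=0]] by (simp add: algebra_simps)
      moreover have "deriv f2 x1 * V2 x1 x2 0 + f2 x1 * pd 1 V2 x1 x2 0 = - (f2 x1)\<^sup>2 / k1 * al1 x2"
        using G1[of x1 x2] nz[of x1] hk1 by (simp add: ga_def field_simps power2_eq_square)
      ultimately show ?thesis by simp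
    qed
    have RC: "U x1 x2 - h x1 / h x0 * U x0 x2 = U x1 0 - h x1 / h x0 * U x0 0" for x1 x2
    proof (rule const_of_deriv0[of "\<lambda>t. U x1 t - h x1 / h x0 * U x0 t"])
      fix x
      have "((\<lambda>t. U x1 t - h x1 / h x0 * U x0 t) has_real_derivative k1 * h x1 * al x - h x1 / h x0 * (k1 * h x0 * al x)) (at x)"
        by (intro DERIV_diff DERIV_cmult U2)
      then show "((\<lambda>t. U x1 t - h x1 / h x0 * U x0 t) has_real_derivative 0) (at x)" using hx0 by simp
    qed
    have KEYA: "- (f2 x1)\<^sup>2 / k1 * al1 x2 = (U x0 x2 / h x0) * hp x1 + (- (f2 x1)\<^sup>2 / k1 * al1 0) - (U x0 0 / h x0) * hp x1" for x1 x2
    proof -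
      have "(\<lambda>t. U t x2) = (\<lambda>t. (U x0 x2 / h x0) * h t + U t 0 - (U x0 0 / h x0) * h t)"
      proof
        fix t show "U t x2 = (U x0 x2 / h x0) * h t + U t 0 - (U x0 0 / h x0) * h t"
          using RC[of t x2] by (simp add: algebra_simps)
      qed
      moreover have "((\<lambda>t. (U x0 x2 / h x0) * h t + U t 0 - (U x0 0 / h x0) * h t) has_real_derivative
          (U x0 x2 / h x0) * hp x1 + (- (f2 x1)\<^sup>2 / k1 * al1 0) - (U x0 0 / h x0) * hp x1) (at x1)"
        by (intro DERIV_diff DERIV_add DERIV_cmult hD U1)
      ultimately show ?thesis using U1[of x2 x1] DERIV_unique by metis
    qed
    have STAR: "- (f2 x1)\<^sup>2 / k1 * al2 x2 = k1 * hp x1 * al x2" for x1 x2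
    proof -
      have d: "((\<lambda>t. - (f2 x1)\<^sup>2 / k1 * al1 t - (hp x1 / h x0) * U x0 t) has_real_derivative
          - (f2 x1)\<^sup>2 / k1 * al2 x2 - (hp x1 / h x0) * (k1 * h x0 * al x2)) (at x2)"
        by (intro DERIV_diff DERIV_cmult al1D U2)
      have "- (f2 x1)\<^sup>2 / k1 * al2 x2 - (hp x1 / h x0) * (k1 * h x0 * al x2) = 0"
      proof (rule deriv_const_zero[OF d])
        fix y show "- (f2 x1)\<^sup>2 / k1 * al1 y - (hp x1 / h x0) * U x0 y = - (f2 x1)\<^sup>2 / k1 * al1 0 - (U x0 0 / h x0) * hp x1"
          using KEYA[of x1 y] by (simp add: algebra_simps)
      qed
      then show ?thesis using hx0 by simp
    qed
    have V2U: "V2 x1 x2 x3 = U x1 x2 / f2 x1" for x1 x2 x3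
      using FV2'[of x1 x2 x3] nz[of x1] by (simp add: U_def)
    show ?thesis
    proof (cases "\<forall>x. al x = 0")
      case True
      have AL1Z: "al1 x = 0" for x using deriv_const_zero[OF alD[of x]] True by blast
      have UC: "U x1 x2 = U 0 0" for x1 x2
        by (rule two_var_const) (use U1 U2 True AL1Z in auto)
      have "\<exists>c1 c2. \<forall>x1 x2 x3. V1 x1 x2 x3 = 0 \<and> V2 x1 x2 x3 = c1 / f2 x1 \<and> V3 x1 x2 x3 = c2"
        by (rule exI[of _ "U 0 0"], rule exI[of _ "be 0"]) (use FV1' V2U UC FV3' True in simp)
      then show ?thesis by blast
    next
      case False
      then obtain y0 where y0: "al y0 \<noteq> 0" by blast
      define kk where "kk = - al2 y0 / al y0"
      have HP: "hp x = kk * (f2 x)\<^sup>2 / k1\<^sup>2" for x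
        using STAR[of x y0] y0 hk1 nz[of x] by (simp add: kk_def field_simps power2_eq_square)
      have DH: "deriv (\<lambda>t. deriv f2 t / f2 t) x = hp x" for x
        using hD[of x] unfolding h_def by (rule DERIV_imp_deriv)
      have COND: "\<forall>x. k1\<^sup>2 / (f2 x)\<^sup>2 * deriv (\<lambda>t. deriv f2 t / f2 t) x = kk"
        using DH HP hk1 nz by (simp add: field_simps)
      have AL2: "al2 x = - kk * al x" for x
      proof -
        have "- (al2 x * (f2 0 * f2 0)) = kk * (al x * (f2 0 * f2 0))"
          using STAR[of 0 x] HP[of 0] hk1 nz[of 0] by (simp add: field_simps power2_eq_square)
        then have "(al2 x + kk * al x) * (f2 0 * f2 0) = 0" by (simp add: algebra_simps)
        then have "al2 x + kk * al x = 0" using nz[of 0] by simp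
        then show ?thesis by simp
      qed
      have al1D': "(al1 has_real_derivative - kk * al x) (at x)" for x using al1D[of x] AL2[of x] by simp
      have MC: "k1 * h x + kk * F0 x = k1 * h 0 + kk * F0 0" for x
      proof (rule const_of_deriv0[of "\<lambda>x. k1 * h x + kk * F0 x"])
        fix y
        have "((\<lambda>x. k1 * h x + kk * F0 x) has_real_derivative k1 * hp y + kk * (- (f2 y)\<^sup>2 / k1)) (at y)"
          by (intro DERIV_add DERIV_cmult hD F0D)
        then show "((\<lambda>x. k1 * h x + kk * F0 x) has_real_derivative 0) (at y)"
          using HP[of y] hk1 by (simp add: field_simps power2_eq_square)
      qed
      consider "kk = 0" | "kk > 0" | "kk < 0" by linarith
      then show ?thesis
      proof cases
        case 1
        have HP0: "hp x = 0" for x using HP[of x] 1 by simp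
        have HC: "h x = h x0" for x using const_of_deriv0[of h x x0] hD HP0 by metis
        define a2 where "a2 = h x0"
        have FP: "deriv f2 x = a2 * f2 x" for x using HC[of x] nz[of x] by (simp add: a2_def h_def field_simps)
        have FE: "f2 x = f2 0 * exp (a2 * x)" for x
        proof -
          have "f2 x * exp (- a2 * x) = f2 0 * exp (- a2 * 0)"
          proof (rule const_of_deriv0[of "\<lambda>x. f2 x * exp (- a2 * x)"])
            fix y
            have "((\<lambda>x. f2 x * exp (- a2 * x)) has_real_derivative deriv f2 y * exp (- a2 * y) + f2 y * (exp (- a2 * y) * (- a2))) (at y)"
              by (auto intro!: derivative_eq_intros f2D)
            then show "((\<lambda>x. f2 x * exp (- a2 * x)) has_real_derivative 0) (at y)" using FP[of y] by (simp add: algebra_simps)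
          qed
          then show ?thesis by (simp add: exp_minus field_simps)
        qed
        have AL1C: "al1 x = al1 0" for x using const_of_deriv0[of al1 x 0] al1D' 1 by simp
        have PD: "((\<lambda>x2. al1 0 / 2 * x2\<^sup>2 + al 0 * x2) has_real_derivative al x) (at x)" for x
        proof -
          have "al x = al1 0 * x + al 0" by (rule lin_of_deriv_const) (use alD AL1C in metis)
          then show ?thesis by (auto intro!: derivative_eq_intros)
        qed
        have UF: "U x1 x2 = k1 * h x1 * (al1 0 / 2 * x2\<^sup>2 + al 0 * x2) + al1 0 * F0 x1 + (U 0 0 - k1 * h 0 * (al1 0 / 2 * 0\<^sup>2 + al 0 * 0) - al1 0 * F0 0)" for x1 x2
          by (rule U_const[OF U1 U2 hD F0D PD]) (use HP 1 AL1C in simp)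
        define C where "C = U 0 0 - al1 0 * F0 0"
        have a2nz: "a2 \<noteq> 0" using hx0 by (simp add: a2_def)
        have "\<exists>a1 a2. a1 \<noteq> 0 \<and> a2 \<noteq> 0 \<and> (\<forall>x. f2 x = a1 * exp (a2 * x)) \<and>
          (\<exists>c1 c2 c3 c4. \<forall>x1 x2 x3.
           V1 x1 x2 x3 = c1 * x2 + c2 \<and>
           V2 x1 x2 x3 = k1 * (deriv f2 x1 / (f2 x1)\<^sup>2) * (c1 / 2 * x2\<^sup>2 + c2 * x2 + c3)
                         + (c1 * F0 x1 + c4) / f2 x1 \<and>
           V3 x1 x2 x3 = c3)"
        proof (intro exI conjI allI)
          show "f2 0 \<noteq> 0" by (rule nz)
          show "a2 \<noteq> 0" by (rule a2nz)
          show "f2 x = f2 0 * exp (a2 * x)" for x by (rule FE)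
          fix x1 x2 x3
          show "V1 x1 x2 x3 = al1 0 * x2 + al 0"
            using FV1'[of x1 x2 x3] lin_of_deriv_const[of al "al1 0" x2] alD AL1C by (metis add.commute mult.commute)
          show "V3 x1 x2 x3 = be 0" by (rule FV3')
          show "V2 x1 x2 x3 = k1 * (deriv f2 x1 / (f2 x1)\<^sup>2) * (al1 0 / 2 * x2\<^sup>2 + al 0 * x2 + be 0)
                         + (al1 0 * F0 x1 + (C - k1 * a2 * be 0)) / f2 x1"
          proof -
            have U': "U x1 x2 = k1 * a2 * (al1 0 / 2 * x2\<^sup>2 + al 0 * x2) + al1 0 * F0 x1 + C"
              using UF[of x1 x2] HC[of x1] by (simp add: C_def a2_def)
            show ?thesis unfolding V2U[of x1 x2 x3] U' FP[of x1] using nz[of x1]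
              by (simp add: field_simps power2_eq_square)
          qed
        qed
        then show ?thesis by blast
      next
        case 2
        define s where "s = sqrt kk"
        have s: "s > 0" "s\<^sup>2 = kk" using 2 by (auto simp: s_def)
        define c1 where "c1 = al 0"
        define c2 where "c2 = al1 0 / s"
        have ALE: "al x = c1 * cos (s * x) + c2 * sin (s * x)" for x
          unfolding c1_def c2_def by (rule ode_cos) (use s alD al1D' in auto)
        have AL1E: "al1 x = - c1 * s * sin (s * x) + c2 * s * cos (s * x)" for x
        proof -
          have "al = (\<lambda>x. c1 * cos (s * x) + c2 * sin (s * x))" using ALE by auto
          moreover have "((\<lambda>x. c1 * cos (s * x) + c2 * sin (s * x)) has_real_derivative - c1 * s * sin (s * x) + c2 * s * cos (s * x)) (at x)"
            by (auto intro!: derivative_eq_intros simp: algebra_simps)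
          ultimately show ?thesis using alD[of x] DERIV_unique by metis
        qed
        let ?P = "\<lambda>x2. 1 / s * (c1 * sin (s * x2) - c2 * cos (s * x2))"
        have PD: "(?P has_real_derivative al x) (at x)" for x
          using s by (auto intro!: derivative_eq_intros simp: ALE field_simps)
        have UF: "U x1 x2 = k1 * h x1 * ?P x2 + 0 * F0 x1 + (U 0 0 - k1 * h 0 * ?P 0 - 0 * F0 0)" for x1 x2
        proof (rule U_const[OF U1 U2 hD F0D PD])
          fix x1 x2
          have sk: "kk = s\<^sup>2" using s by simp
          show "- (f2 x1)\<^sup>2 / k1 * al1 x2 = k1 * hp x1 * ?P x2 + 0 * (- (f2 x1)\<^sup>2 / k1)"
            unfolding HP AL1E sk using s(1) hk1 by (simp add: field_simps power2_eq_square)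
        qed
        define C where "C = U 0 0 - k1 * h 0 * ?P 0"
        have "\<exists>k. 0 < k \<and>
        (\<forall>x. k1\<^sup>2 / (f2 x)\<^sup>2 * deriv (\<lambda>t. deriv f2 t / f2 t) x = k) \<and>
        (\<exists>c1 c2 c3 c4. \<forall>x1 x2 x3.
           V1 x1 x2 x3 = c1 * cos (sqrt k * x2) + c2 * sin (sqrt k * x2) \<and>
           V2 x1 x2 x3 = k1 * (deriv f2 x1 / (f2 x1)\<^sup>2) *
                           (1 / sqrt k * (c1 * sin (sqrt k * x2) - c2 * cos (sqrt k * x2)) + c3)
                         + (c3 * k * F0 x1 + c4) / f2 x1 \<and>
           V3 x1 x2 x3 = c3)"
        proof (intro exI conjI allI)
          show "0 < kk" by (rule 2)
          show "k1\<^sup>2 / (f2 x)\<^sup>2 * deriv (\<lambda>t. deriv f2 t / f2 t) x = kk" for x using COND by blast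
          fix x1 x2 x3
          show "V1 x1 x2 x3 = c1 * cos (sqrt kk * x2) + c2 * sin (sqrt kk * x2)"
            using FV1'[of x1 x2 x3] ALE[of x2] by (simp add: s_def)
          show "V3 x1 x2 x3 = be 0" by (rule FV3')
          have "V2 x1 x2 x3 = (k1 * h x1 * ?P x2 + C) / f2 x1" using V2U[of x1 x2 x3] UF[of x1 x2] by (simp add: C_def)
          also have "\<dots> = k1 * (deriv f2 x1 / (f2 x1)\<^sup>2) * (?P x2 + be 0) + (be 0 * kk * F0 x1 + (C - be 0 * (k1 * h 0 + kk * F0 0))) / f2 x1"
          proof -
            have hf: "deriv f2 x1 / (f2 x1)\<^sup>2 = h x1 / f2 x1" using nz[of x1] by (simp add: h_def power2_eq_square)
            show ?thesis unfolding hf MC[of x1, symmetric] using nz[of x1] by (simp add: field_simps)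
          qed
          finally show "V2 x1 x2 x3 = k1 * (deriv f2 x1 / (f2 x1)\<^sup>2) * (1 / sqrt kk * (c1 * sin (sqrt kk * x2) - c2 * cos (sqrt kk * x2)) + be 0)
                         + (be 0 * kk * F0 x1 + (C - be 0 * (k1 * h 0 + kk * F0 0))) / f2 x1"
            by (simp add: s_def)
        qed
        then show ?thesis by blast
      next
        case 3
        define s where "s = sqrt (- kk)"
        have s: "s > 0" "s\<^sup>2 = - kk" using 3 by (auto simp: s_def)
        define c1 where "c1 = (al 0 + al1 0 / s) / 2"
        define c2 where "c2 = (al 0 - al1 0 / s) / 2"
        have ALE: "al x = c1 * exp (s * x) + c2 * exp (- s * x)" for x
          unfolding c1_def c2_def by (rule ode_exp) (use s alD al1D' in auto)
        have AL1E: "al1 x = c1 * s * exp (s * x) - c2 * s * exp (- s * x)" for x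
        proof -
          have "al = (\<lambda>x. c1 * exp (s * x) + c2 * exp (- s * x))" using ALE by auto
          moreover have "((\<lambda>x. c1 * exp (s * x) + c2 * exp (- s * x)) has_real_derivative c1 * s * exp (s * x) - c2 * s * exp (- s * x)) (at x)"
            by (auto intro!: derivative_eq_intros simp: algebra_simps)
          ultimately show ?thesis using alD[of x] DERIV_unique by metis
        qed
        let ?P = "\<lambda>x2. 1 / s * (c1 * exp (s * x2) - c2 * exp (- s * x2))"
        have PD: "(?P has_real_derivative al x) (at x)" for x
          using s by (auto intro!: derivative_eq_intros simp: ALE field_simps)
        have UF: "U x1 x2 = k1 * h x1 * ?P x2 + 0 * F0 x1 + (U 0 0 - k1 * h 0 * ?P 0 - 0 * F0 0)" for x1 x2
        proof (rule U_const[OF U1 U2 hD F0D PD])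
          fix x1 x2
          have sk: "kk = - s\<^sup>2" using s by simp
          show "- (f2 x1)\<^sup>2 / k1 * al1 x2 = k1 * hp x1 * ?P x2 + 0 * (- (f2 x1)\<^sup>2 / k1)"
            unfolding HP AL1E sk using s(1) hk1 by (simp add: field_simps power2_eq_square)
        qed
        define C where "C = U 0 0 - k1 * h 0 * ?P 0"
        have "\<exists>k. k < 0 \<and>
        (\<forall>x. k1\<^sup>2 / (f2 x)\<^sup>2 * deriv (\<lambda>t. deriv f2 t / f2 t) x = k) \<and>
        (\<exists>c1 c2 c3 c4. \<forall>x1 x2 x3.
           V1 x1 x2 x3 = c1 * exp (sqrt (- k) * x2) + c2 * exp (- sqrt (- k) * x2) \<and>
           V2 x1 x2 x3 = k1 * (deriv f2 x1 / (f2 x1)\<^sup>2) *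
                           (1 / sqrt (- k) * (c1 * exp (sqrt (- k) * x2) - c2 * exp (- sqrt (- k) * x2)) + c3)
                         + (c3 * k * F0 x1 + c4) / f2 x1 \<and>
           V3 x1 x2 x3 = c3)"
        proof (intro exI conjI allI)
          show "kk < 0" by (rule 3)
          show "k1\<^sup>2 / (f2 x)\<^sup>2 * deriv (\<lambda>t. deriv f2 t / f2 t) x = kk" for x using COND by blast
          fix x1 x2 x3
          show "V1 x1 x2 x3 = c1 * exp (sqrt (- kk) * x2) + c2 * exp (- sqrt (- kk) * x2)"
            using FV1'[of x1 x2 x3] ALE[of x2] by (simp add: s_def)
          show "V3 x1 x2 x3 = be 0" by (rule FV3')
          have "V2 x1 x2 x3 = (k1 * h x1 * ?P x2 + C) / f2 x1" using V2U[of x1 x2 x3] UF[of x1 x2] by (simp add: C_def)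
          also have "\<dots> = k1 * (deriv f2 x1 / (f2 x1)\<^sup>2) * (?P x2 + be 0) + (be 0 * kk * F0 x1 + (C - be 0 * (k1 * h 0 + kk * F0 0))) / f2 x1"
          proof -
            have hf: "deriv f2 x1 / (f2 x1)\<^sup>2 = h x1 / f2 x1" using nz[of x1] by (simp add: h_def power2_eq_square)
            show ?thesis unfolding hf MC[of x1, symmetric] using nz[of x1] by (simp add: field_simps)
          qed
          finally show "V2 x1 x2 x3 = k1 * (deriv f2 x1 / (f2 x1)\<^sup>2) * (1 / sqrt (- kk) * (c1 * exp (sqrt (- kk) * x2) - c2 * exp (- sqrt (- kk) * x2)) + be 0)
                         + (be 0 * kk * F0 x1 + (C - be 0 * (k1 * h 0 + kk * F0 0))) / f2 x1"
            by (simp add: s_def)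
        qed
        then show ?thesis by blast
      qed
    qed
  qed
qed


theorem mainTheorem11:
  fixes k1 k3 :: real
    and f2 F0 :: "real \<Rightarrow> real"
    and V1 V2 V3 :: "real \<Rightarrow> real \<Rightarrow> real \<Rightarrow> real"
  assumes hk1: "k1 \<noteq> 0" and hk3: "k3 \<noteq> 0"
    and hf2: "smooth1 f2" and hf2nz: "\<forall>x. f2 x \<noteq> 0"
    and hF0: "\<forall>x. (F0 has_real_derivative (- (f2 x)\<^sup>2 / k1)) (at x)"
    and hV: "smooth3 V1" "smooth3 V2" "smooth3 V3"
  shows "is_killing
           (\<lambda>i j x1 x2 x3. if i \<noteq> j then 0
                           else if i = 1 then 1 / k1\<^sup>2
                           else if i = 2 then 1 / (f2 x1)\<^sup>2
                           else 1 / k3\<^sup>2)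
           (\<lambda>i x1 x2 x3. if i = 1 then k1 * V1 x1 x2 x3
                         else if i = 2 then f2 x1 * V2 x1 x2 x3
                         else k3 * V3 x1 x2 x3)
    \<longleftrightarrow>
    ((\<exists>c1 c2. \<forall>x1 x2 x3. V1 x1 x2 x3 = 0 \<and> V2 x1 x2 x3 = c1 / f2 x1 \<and> V3 x1 x2 x3 = c2)
   \<or> (\<exists>k2. (\<forall>x. f2 x = k2) \<and>
        (\<exists>c1 c2 c3 c4 c5 c6. \<forall>x1 x2 x3.
           V1 x1 x2 x3 = c1 * x2 + c2 * x3 + c3 \<and>
           V2 x1 x2 x3 = - (c1 * k2 / k1) * x1 - c4 * k2 * x3 + c5 \<and>
           V3 x1 x2 x3 = - (c2 * k3 / k1) * x1 + c4 * k3 * x2 + c6))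
   \<or> (\<exists>a1 a2. a1 \<noteq> 0 \<and> a2 \<noteq> 0 \<and> (\<forall>x. f2 x = a1 * exp (a2 * x)) \<and>
        (\<exists>c1 c2 c3 c4. \<forall>x1 x2 x3.
           V1 x1 x2 x3 = c1 * x2 + c2 \<and>
           V2 x1 x2 x3 = k1 * (deriv f2 x1 / (f2 x1)\<^sup>2) * (c1 / 2 * x2\<^sup>2 + c2 * x2 + c3)
                         + (c1 * F0 x1 + c4) / f2 x1 \<and>
           V3 x1 x2 x3 = c3))
   \<or> (\<exists>k. 0 < k \<and>
        (\<forall>x. k1\<^sup>2 / (f2 x)\<^sup>2 * deriv (\<lambda>t. deriv f2 t / f2 t) x = k) \<and>
        (\<exists>c1 c2 c3 c4. \<forall>x1 x2 x3.
           V1 x1 x2 x3 = c1 * cos (sqrt k * x2) + c2 * sin (sqrt k * x2) \<and>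
           V2 x1 x2 x3 = k1 * (deriv f2 x1 / (f2 x1)\<^sup>2) *
                           (1 / sqrt k * (c1 * sin (sqrt k * x2) - c2 * cos (sqrt k * x2)) + c3)
                         + (c3 * k * F0 x1 + c4) / f2 x1 \<and>
           V3 x1 x2 x3 = c3))
   \<or> (\<exists>k. k < 0 \<and>
        (\<forall>x. k1\<^sup>2 / (f2 x)\<^sup>2 * deriv (\<lambda>t. deriv f2 t / f2 t) x = k) \<and>
        (\<exists>c1 c2 c3 c4. \<forall>x1 x2 x3.
           V1 x1 x2 x3 = c1 * exp (sqrt (- k) * x2) + c2 * exp (- sqrt (- k) * x2) \<and>
           V2 x1 x2 x3 = k1 * (deriv f2 x1 / (f2 x1)\<^sup>2) *
                           (1 / sqrt (- k) * (c1 * exp (sqrt (- k) * x2) - c2 * exp (- sqrt (- k) * x2)) + c3)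
                         + (c3 * k * F0 x1 + c4) / f2 x1 \<and>
           V3 x1 x2 x3 = c3)))"
proof -
  have f2D: "\<And>x. (f2 has_real_derivative deriv f2 x) (at x)" using smooth1_D(1)[OF hf2] .
  have fpD: "\<And>x. (deriv f2 has_real_derivative deriv (deriv f2) x) (at x)" using smooth1_D(2)[OF hf2] .
  have nz: "\<And>x. f2 x \<noteq> 0" using hf2nz by blast
  have F0D: "\<And>x. (F0 has_real_derivative (- (f2 x)\<^sup>2 / k1)) (at x)" using hF0 by blast
  show ?thesis
    apply (rule iffI)
     apply (rule forward[OF hk1 hk3 f2D fpD nz F0D hV]; assumption)
    apply (elim disjE exE conjE)
    subgoal by (rule rev_i[OF hk1 hk3 f2D nz]; assumption)
    subgoal by (rule rev_ii[OF hk1 hk3 nz]; assumption)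
    subgoal by (rule rev_iii[OF hk1 hk3 nz F0D]; assumption)
    subgoal by (rule rev_iv[OF hk1 hk3 f2D fpD nz F0D]; assumption)
    subgoal by (rule rev_v[OF hk1 hk3 f2D fpD nz F0D]; assumption)
    done
qed

end
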